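(* For a quantum sequence ensemble $\mathcal{E}=\bigotimes_{l=1}^{L}\mathcal{E}^{l}$, $\vec{x}=(x_{1},\ldots,x_{L})$ with $x_l\in\{1,\ldots,n_l\}$, and $E\in\mathbb{M}_{\vec{x}}(\mathcal{E})$, we have \[ \Big[\bigotimes_{l=1}^{L}\Pi_{x_{l}}^{\bot}(\mathcal{E}^{l})\Big]\Pi(\mathcal{E})E\Pi(\mathcal{E})\Big[\bigotimes_{l=1}^{L}\Pi_{x_{l}}^{\bot}(\mathcal{E}^{l})\Big]=\Pi(\mathcal{E})E\Pi(\mathcal{E}), \] where $\Pi(\mathcal{E})$ is the projection onto the support of $\rho_{0}$ and $\Pi_{x_{l}}^{\bot}(\mathcal{E}^{l})$ is the projection onto the kernel of $\mathcal{C}_{x_{l}}(\mathcal{E}^{l})\rho_{0}^{l}-\eta_{x_{l}}^{l}\rho_{x_{l}}^{l}$.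
   Context: Let $\mathcal{E}^{l}=\{\eta_{i}^{l},\rho_{i}^{l}\}_{i\in\{1,\ldots,n_{l}\}}$, $l=1,\ldots,L$, be quantum state ensembles (density operators on finite-dimensional Hilbert spaces, nonzero probabilities $\eta_i^l$), with average states $\rho_0^l=\sum_i\eta_i^l\rho_i^l$. The sequence ensemble $\mathcal{E}=\bigotimes_l\mathcal{E}^l=\{\eta_{\vec{c}},\rho_{\vec{c}}\}_{\vec{c}}$ has $\eta_{\vec{c}}=\prod_l\eta_{c_l}^l$, $\rho_{\vec{c}}=\bigotimes_l\rho_{c_l}^l$, and average state $\rho_0=\bigotimes_l\rho_0^l$. For an ensemble $\{\eta_i,\rho_i\}_i$ with average state $\rho_0$, the maximum confidence to identify $\rho_x$ is $\mathcal{C}_x=\max\eta_x\mathrm{Tr}(\rho_xM_x)/\mathrm{Tr}(\rho_0M_x)$ over measurements $\{M_?\}\cup\{M_i\}_i$ with $\mathrm{Tr}(\rho_0M_x)>0$; equivalently $\mathcal{C}_x=\min\{q\in\mathbb{R}\mid q\rho_0-\eta_x\rho_x\succeq0\}$. For the sequence ensemble, $\mathbb{M}_{\vec{x}}(\mathcal{E})=\{E\succeq0\mid \mathrm{Tr}[(\mathcal{C}_{\vec{x}}(\mathcal{E})\rho_0-\eta_{\vec{x}}\rho_{\vec{x}})E]=0\}$, the set of positive-semidefinite operators that can serve as the $\vec{x}$-th element of a maximum-confidence measurement. *)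

theory Defs
  imports "Jordan_Normal_Form.Matrix_Kernel"
begin

definition ctrace :: "complex mat \<Rightarrow> complex" where
  "ctrace A = (\<Sum>i<dim_row A. A $$ (i, i))"

definition cadj :: "complex mat \<Rightarrow> complex mat" where
  "cadj A = mat (dim_col A) (dim_row A) (\<lambda>(i, j). cnj (A $$ (j, i)))"

definition cinner :: "complex vec \<Rightarrow> complex vec \<Rightarrow> complex" where
  "cinner v w = (\<Sum>i<dim_vec v. cnj (v $ i) * w $ i)"

definition psd :: "nat \<Rightarrow> complex mat \<Rightarrow> bool" where
  "psd n A \<longleftrightarrow> A \<in> carrier_mat n n \<and> cadj A = A \<and>
     (\<forall>v \<in> carrier_vec n. 0 \<le> Re (cinner v (A *\<^sub>v v)))"

definition density_op :: "nat \<Rightarrow> complex mat \<Rightarrow> bool" where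
  "density_op n \<rho> \<longleftrightarrow> psd n \<rho> \<and> ctrace \<rho> = 1"

definition mat_range :: "complex mat \<Rightarrow> complex vec set" where
  "mat_range A = {A *\<^sub>v v | v. v \<in> carrier_vec (dim_col A)}"

definition is_orth_proj :: "nat \<Rightarrow> complex mat \<Rightarrow> complex vec set \<Rightarrow> bool" where
  "is_orth_proj n P S \<longleftrightarrow> P \<in> carrier_mat n n \<and> P * P = P \<and> cadj P = P \<and> mat_range P = S"

definition orth_proj :: "nat \<Rightarrow> complex vec set \<Rightarrow> complex mat" where
  "orth_proj n S = (THE P. is_orth_proj n P S)"

text \<open>Projection onto the support (= range, for Hermitian operators) of a square matrix.\<close>
definition supp_proj :: "complex mat \<Rightarrow> complex mat" where
  "supp_proj A = orth_proj (dim_row A) (mat_range A)"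

definition ker_proj :: "complex mat \<Rightarrow> complex mat" where
  "ker_proj A = orth_proj (dim_row A) (mat_kernel A)"

definition kron :: "complex mat \<Rightarrow> complex mat \<Rightarrow> complex mat" where
  "kron A B = mat (dim_row A * dim_row B) (dim_col A * dim_col B)
     (\<lambda>(i, j). A $$ (i div dim_row B, j div dim_col B) * B $$ (i mod dim_row B, j mod dim_col B))"

definition tensor_list :: "nat \<Rightarrow> (nat \<Rightarrow> complex mat) \<Rightarrow> complex mat" where
  "tensor_list L f = foldr (\<lambda>l M. kron (f l) M) [0..<L] (1\<^sub>m 1)"

definition max_conf :: "nat \<Rightarrow> real \<Rightarrow> complex mat \<Rightarrow> complex mat \<Rightarrow> real" where
  "max_conf n \<eta>x \<rho>x \<rho>0 =
     Inf {q :: real. psd n (complex_of_real q \<cdot>\<^sub>m \<rho>0 - complex_of_real \<eta>x \<cdot>\<^sub>m \<rho>x)}"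

definition ensemble :: "nat \<Rightarrow> nat \<Rightarrow> (nat \<Rightarrow> real) \<Rightarrow> (nat \<Rightarrow> complex mat) \<Rightarrow> bool" where
  "ensemble d n \<eta> \<rho> \<longleftrightarrow> (\<forall>i<n. 0 < \<eta> i \<and> density_op d (\<rho> i)) \<and> (\<Sum>i<n. \<eta> i) = 1"

definition avg_state :: "nat \<Rightarrow> nat \<Rightarrow> (nat \<Rightarrow> real) \<Rightarrow> (nat \<Rightarrow> complex mat) \<Rightarrow> complex mat" where
  "avg_state d n \<eta> \<rho> = mat d d (\<lambda>(a, b). \<Sum>i<n. complex_of_real (\<eta> i) * \<rho> i $$ (a, b))"

text \<open>Sequence ensemble  E = E^0 \<otimes> ... \<otimes> E^(L-1)  (0-based indexing of the factors and of
  the states); ensemble l lives on C^(d l) and has n l members eta l i, rho l i.\<close>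

definition seq_dim :: "nat \<Rightarrow> (nat \<Rightarrow> nat) \<Rightarrow> nat" where
  "seq_dim L d = (\<Prod>l<L. d l)"

definition seq_prob :: "nat \<Rightarrow> (nat \<Rightarrow> nat \<Rightarrow> real) \<Rightarrow> (nat \<Rightarrow> nat) \<Rightarrow> real" where
  "seq_prob L \<eta> x = (\<Prod>l<L. \<eta> l (x l))"

definition seq_state :: "nat \<Rightarrow> (nat \<Rightarrow> nat \<Rightarrow> complex mat) \<Rightarrow> (nat \<Rightarrow> nat) \<Rightarrow> complex mat" where
  "seq_state L \<rho> x = tensor_list L (\<lambda>l. \<rho> l (x l))"

definition seq_avg :: "nat \<Rightarrow> (nat \<Rightarrow> nat) \<Rightarrow> (nat \<Rightarrow> nat) \<Rightarrow> (nat \<Rightarrow> nat \<Rightarrow> real)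
    \<Rightarrow> (nat \<Rightarrow> nat \<Rightarrow> complex mat) \<Rightarrow> complex mat" where
  "seq_avg L d n \<eta> \<rho> = tensor_list L (\<lambda>l. avg_state (d l) (n l) (\<eta> l) (\<rho> l))"

definition comp_conf :: "(nat \<Rightarrow> nat) \<Rightarrow> (nat \<Rightarrow> nat) \<Rightarrow> (nat \<Rightarrow> nat \<Rightarrow> real)
    \<Rightarrow> (nat \<Rightarrow> nat \<Rightarrow> complex mat) \<Rightarrow> nat \<Rightarrow> nat \<Rightarrow> real" where
  "comp_conf d n \<eta> \<rho> l x = max_conf (d l) (\<eta> l x) (\<rho> l x) (avg_state (d l) (n l) (\<eta> l) (\<rho> l))"

definition seq_conf :: "nat \<Rightarrow> (nat \<Rightarrow> nat) \<Rightarrow> (nat \<Rightarrow> nat) \<Rightarrow> (nat \<Rightarrow> nat \<Rightarrow> real)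
    \<Rightarrow> (nat \<Rightarrow> nat \<Rightarrow> complex mat) \<Rightarrow> (nat \<Rightarrow> nat) \<Rightarrow> real" where
  "seq_conf L d n \<eta> \<rho> x =
     max_conf (seq_dim L d) (seq_prob L \<eta> x) (seq_state L \<rho> x) (seq_avg L d n \<eta> \<rho>)"

definition seq_MC_set :: "nat \<Rightarrow> (nat \<Rightarrow> nat) \<Rightarrow> (nat \<Rightarrow> nat) \<Rightarrow> (nat \<Rightarrow> nat \<Rightarrow> real)
    \<Rightarrow> (nat \<Rightarrow> nat \<Rightarrow> complex mat) \<Rightarrow> (nat \<Rightarrow> nat) \<Rightarrow> complex mat set" where
  "seq_MC_set L d n \<eta> \<rho> x =
     {E. psd (seq_dim L d) E \<and>
         ctrace ((complex_of_real (seq_conf L d n \<eta> \<rho> x) \<cdot>\<^sub>m seq_avg L d n \<eta> \<rho>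
                  - complex_of_real (seq_prob L \<eta> x) \<cdot>\<^sub>m seq_state L \<rho> x) * E) = 0}"

end

theory Submission
  imports Defs
begin

lemma mult_idx: "A \<in> carrier_mat n m \<Longrightarrow> B \<in> carrier_mat m k \<Longrightarrow> i < n \<Longrightarrow> j < k \<Longrightarrow>
  (A * B) $$ (i, j) = (\<Sum>t<m. A $$ (i, t) * B $$ (t, j))"
  by (auto simp: scalar_prod_def atLeast0LessThan intro!: sum.cong)

lemma mv_idx: "A \<in> carrier_mat n m \<Longrightarrow> v \<in> carrier_vec m \<Longrightarrow> i < n \<Longrightarrow>
  (A *\<^sub>v v) $ i = (\<Sum>t<m. A $$ (i, t) * v $ t)"
  by (auto simp: scalar_prod_def atLeast0LessThan intro!: sum.cong)

lemma cadj_dims[simp]: "dim_row (cadj A) = dim_col A" "dim_col (cadj A) = dim_row A"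
  by (auto simp: cadj_def)

lemma cadj_carrier[simp, intro]: "A \<in> carrier_mat n m \<Longrightarrow> cadj A \<in> carrier_mat m n"
  by (auto simp: cadj_def)

lemma cadj_idx[simp]: "i < dim_col A \<Longrightarrow> j < dim_row A \<Longrightarrow> cadj A $$ (i, j) = cnj (A $$ (j, i))"
  by (auto simp: cadj_def)

lemma cadj_cadj[simp]: "cadj (cadj A) = A"
  by (rule eq_matI) (auto simp: cadj_def)

lemma cadj_mult: assumes "A \<in> carrier_mat n m" "B \<in> carrier_mat m k"
  shows "cadj (A * B) = cadj B * cadj A"
proof (rule eq_matI)
  fix i j assume "i < dim_row (cadj B * cadj A)" "j < dim_col (cadj B * cadj A)"
  hence ij: "i < k" "j < n" using assms by auto
  have "cadj (A * B) $$ (i, j) = cnj ((A * B) $$ (j, i))" using assms ij by simp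
  also have "\<dots> = cnj (\<Sum>t<m. A $$ (j, t) * B $$ (t, i))" using assms ij by (subst mult_idx) auto
  also have "\<dots> = (\<Sum>t<m. cadj B $$ (i, t) * cadj A $$ (t, j))"
    using assms ij by (auto simp: cnj_sum mult.commute intro!: sum.cong)
  also have "\<dots> = (cadj B * cadj A) $$ (i, j)" using assms ij by (subst mult_idx[of _ k m _ n]) auto
  finally show "cadj (A * B) $$ (i, j) = (cadj B * cadj A) $$ (i, j)" .
qed (use assms in auto)

lemma cadj_add: "A \<in> carrier_mat n m \<Longrightarrow> B \<in> carrier_mat n m \<Longrightarrow> cadj (A + B) = cadj A + cadj B"
  by (rule eq_matI) auto

lemma cadj_minus: "A \<in> carrier_mat n m \<Longrightarrow> B \<in> carrier_mat n m \<Longrightarrow> cadj (A - B) = cadj A - cadj B"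
  by (rule eq_matI) auto

lemma cadj_smult: "cadj (c \<cdot>\<^sub>m A) = cnj c \<cdot>\<^sub>m cadj A"
  by (rule eq_matI) auto

lemma cadj_one[simp]: "cadj (1\<^sub>m n) = 1\<^sub>m n"
  by (rule eq_matI) auto

lemma cadj_zero[simp]: "cadj (0\<^sub>m n m) = 0\<^sub>m m n"
  by (rule eq_matI) auto

lemma cinner_adj: assumes "A \<in> carrier_mat n m" "v \<in> carrier_vec n" "w \<in> carrier_vec m"
  shows "cinner v (A *\<^sub>v w) = cinner (cadj A *\<^sub>v v) w"
proof -
  have "cinner v (A *\<^sub>v w) = (\<Sum>i<n. cnj (v $ i) * (\<Sum>t<m. A $$ (i, t) * w $ t))"
    using assms by (auto simp: cinner_def mv_idx[OF assms(1,3)] simp del: index_mult_mat_vec intro!: sum.cong)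
  also have "\<dots> = (\<Sum>i<n. \<Sum>t<m. cnj (v $ i) * A $$ (i, t) * w $ t)"
    by (simp add: sum_distrib_left mult.assoc)
  also have "\<dots> = (\<Sum>t<m. \<Sum>i<n. cnj (v $ i) * A $$ (i, t) * w $ t)"
    by (rule sum.swap)
  also have "\<dots> = (\<Sum>t<m. cnj (\<Sum>i<n. cadj A $$ (t, i) * v $ i) * w $ t)"
    using assms by (auto simp: cnj_sum sum_distrib_right intro!: sum.cong)
  also have "\<dots> = cinner (cadj A *\<^sub>v v) w"
    using assms by (auto simp: cinner_def mv_idx[of _ m n] simp del: index_mult_mat_vec intro!: sum.cong)
  finally show ?thesis .
qed

lemma cinner_add_right: "dim_vec w1 = dim_vec v \<Longrightarrow> dim_vec w2 = dim_vec v \<Longrightarrow>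
  cinner v (w1 + w2) = cinner v w1 + cinner v w2"
  by (simp add: cinner_def distrib_left sum.distrib)

lemma cinner_minus_right: "dim_vec w1 = dim_vec v \<Longrightarrow> dim_vec w2 = dim_vec v \<Longrightarrow>
  cinner v (w1 - w2) = cinner v w1 - cinner v w2"
  by (simp add: cinner_def right_diff_distrib sum_subtractf)

lemma cinner_smult_right: "dim_vec w = dim_vec v \<Longrightarrow> cinner v (c \<cdot>\<^sub>v w) = c * cinner v w"
  by (simp add: cinner_def sum_distrib_left mult.left_commute)

lemma cinner_self: "cinner v v = of_real (\<Sum>i<dim_vec v. (cmod (v $ i))^2)"
proof -
  have "\<And>z::complex. cnj z * z = of_real ((cmod z)^2)"
    by (metis complex_norm_square mult.commute)
  thus ?thesis by (simp add: cinner_def)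
qed

lemma cinner_self_Re: "Re (cinner v v) = (\<Sum>i<dim_vec v. (cmod (v $ i))^2)"
  by (simp add: cinner_self)

lemma cinner_self_ge0: "0 \<le> Re (cinner v v)"
  by (simp add: cinner_self_Re sum_nonneg)

lemma cinner_self_zero: assumes "cinner v v = 0" shows "v = 0\<^sub>v (dim_vec v)"
proof -
  have "(\<Sum>i<dim_vec v. (cmod (v $ i))^2) = 0" using assms cinner_self_Re[of v] by simp
  hence "\<forall>i\<in>{..<dim_vec v}. (cmod (v $ i))^2 = 0"
    using sum_nonneg_eq_0_iff[of "{..<dim_vec v}" "\<lambda>i. (cmod (v $ i))^2"] by simp
  thus ?thesis by (intro eq_vecI) auto
qed

lemma cinner_cnj: "dim_vec w = dim_vec v \<Longrightarrow> cinner w v = cnj (cinner v w)"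
  unfolding cinner_def cnj_sum by (auto intro!: sum.cong)

lemma herm_form_real: assumes "A \<in> carrier_mat n n" "cadj A = A" "v \<in> carrier_vec n"
  shows "cinner v (A *\<^sub>v v) = of_real (Re (cinner v (A *\<^sub>v v)))"
proof -
  have "cinner v (A *\<^sub>v v) = cinner (A *\<^sub>v v) v" using cinner_adj[OF assms(1,3,3)] assms(2) by simp
  also have "\<dots> = cnj (cinner v (A *\<^sub>v v))" using assms by (intro cinner_cnj) auto
  finally have "Im (cinner v (A *\<^sub>v v)) = - Im (cinner v (A *\<^sub>v v))"
    by (metis cnj.sel(2))
  hence "Im (cinner v (A *\<^sub>v v)) = 0" by linarith
  thus ?thesis by (simp add: complex_eq_iff)
qed

lemma smult_mat_mv: "dim_vec v = dim_col A \<Longrightarrow> (c \<cdot>\<^sub>m A) *\<^sub>v v = c \<cdot>\<^sub>v (A *\<^sub>v v)"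
  by (rule eq_vecI) (auto simp: scalar_prod_def sum_distrib_left mult.assoc)

lemma cinner_add_left: "dim_vec v1 = dim_vec w \<Longrightarrow> dim_vec v2 = dim_vec w \<Longrightarrow>
  cinner (v1 + v2) w = cinner v1 w + cinner v2 w"
  by (simp add: cinner_def distrib_right sum.distrib)

lemma cinner_smult_left: "cinner (c \<cdot>\<^sub>v v) w = cnj c * cinner v w"
  by (simp add: cinner_def sum_distrib_left mult.assoc)

lemma psd_carrier: "psd n A \<Longrightarrow> A \<in> carrier_mat n n" by (simp add: psd_def)
lemma psd_herm: "psd n A \<Longrightarrow> cadj A = A" by (simp add: psd_def)
lemma psd_form: "psd n A \<Longrightarrow> v \<in> carrier_vec n \<Longrightarrow> 0 \<le> Re (cinner v (A *\<^sub>v v))"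
  by (simp add: psd_def)

lemma psdI: "A \<in> carrier_mat n n \<Longrightarrow> cadj A = A \<Longrightarrow>
  (\<And>v. v \<in> carrier_vec n \<Longrightarrow> 0 \<le> Re (cinner v (A *\<^sub>v v))) \<Longrightarrow> psd n A"
  by (simp add: psd_def)

lemma psd_add: assumes "psd n A" "psd n B" shows "psd n (A + B)"
proof (rule psdI)
  have A: "A \<in> carrier_mat n n" and B: "B \<in> carrier_mat n n" using assms by (auto simp: psd_def)
  thus "A + B \<in> carrier_mat n n" by simp
  show "cadj (A + B) = A + B" using A B assms by (simp add: cadj_add psd_herm)
  fix v :: "complex vec" assume v: "v \<in> carrier_vec n"
  have "cinner v ((A + B) *\<^sub>v v) = cinner v (A *\<^sub>v v) + cinner v (B *\<^sub>v v)"
    using A B v by (simp add: add_mult_distrib_mat_vec cinner_add_right)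
  thus "0 \<le> Re (cinner v ((A + B) *\<^sub>v v))" using psd_form[OF assms(1) v] psd_form[OF assms(2) v] by simp
qed

lemma psd_smult: assumes "psd n A" "0 \<le> c" shows "psd n (complex_of_real c \<cdot>\<^sub>m A)"
proof (rule psdI)
  have A: "A \<in> carrier_mat n n" using assms by (auto simp: psd_def)
  thus "complex_of_real c \<cdot>\<^sub>m A \<in> carrier_mat n n" by simp
  show "cadj (complex_of_real c \<cdot>\<^sub>m A) = complex_of_real c \<cdot>\<^sub>m A" using assms by (simp add: cadj_smult psd_herm)
  fix v :: "complex vec" assume v: "v \<in> carrier_vec n"
  have "cinner v ((complex_of_real c \<cdot>\<^sub>m A) *\<^sub>v v) = complex_of_real c * cinner v (A *\<^sub>v v)"
    using A v by (simp add: smult_mat_mv cinner_smult_right)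
  thus "0 \<le> Re (cinner v ((complex_of_real c \<cdot>\<^sub>m A) *\<^sub>v v))" using psd_form[OF assms(1) v] assms(2) by simp
qed

lemma psd_zero: "psd n (0\<^sub>m n n)"
  by (rule psdI) (auto simp: cinner_def)

lemma form_expand: assumes A: "A \<in> carrier_mat n n" "cadj A = A" and x: "x \<in> carrier_vec n" and y: "y \<in> carrier_vec n"
  shows "cinner (y + s \<cdot>\<^sub>v x) (A *\<^sub>v (y + s \<cdot>\<^sub>v x)) =
    cinner y (A *\<^sub>v y) + s * cnj (cinner x (A *\<^sub>v y)) + cnj s * cinner x (A *\<^sub>v y) + s * cnj s * cinner x (A *\<^sub>v x)"
proof -
  have e1: "A *\<^sub>v (y + s \<cdot>\<^sub>v x) = A *\<^sub>v y + s \<cdot>\<^sub>v (A *\<^sub>v x)"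
    using A x y by (simp add: mult_add_distrib_mat_vec mult_mat_vec)
  have yx: "cinner y (A *\<^sub>v x) = cnj (cinner x (A *\<^sub>v y))"
  proof -
    have "cinner y (A *\<^sub>v x) = cinner (A *\<^sub>v y) x" using cinner_adj[OF A(1) y x] A(2) by simp
    also have "\<dots> = cnj (cinner x (A *\<^sub>v y))" using A x y by (intro cinner_cnj) auto
    finally show ?thesis .
  qed
  have "cinner (y + s \<cdot>\<^sub>v x) (A *\<^sub>v y + s \<cdot>\<^sub>v (A *\<^sub>v x)) =
     cinner y (A *\<^sub>v y) + s * cinner y (A *\<^sub>v x) + cnj s * cinner x (A *\<^sub>v y) + cnj s * (s * cinner x (A *\<^sub>v x))"
    using A x y by (simp add: cinner_add_left cinner_add_right cinner_smult_left cinner_smult_right algebra_simps)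
  thus ?thesis using e1 yx by (simp add: algebra_simps)
qed

lemma cnj_mult_self: "s * cnj s = complex_of_real ((cmod s)^2)"
  using complex_norm_square[of s] by simp

lemma psd_cs: assumes P: "psd n A" and x: "x \<in> carrier_vec n" and y: "y \<in> carrier_vec n"
  and a: "0 < Re (cinner x (A *\<^sub>v x))"
  shows "(cmod (cinner x (A *\<^sub>v y)))^2 \<le> Re (cinner x (A *\<^sub>v x)) * Re (cinner y (A *\<^sub>v y))"
proof -
  have A: "A \<in> carrier_mat n n" "cadj A = A" using P by (auto simp: psd_def)
  define a where "a = Re (cinner x (A *\<^sub>v x))"
  define c where "c = cinner x (A *\<^sub>v y)"
  define s where "s = - c / complex_of_real a"
  have ax: "cinner x (A *\<^sub>v x) = complex_of_real a" unfolding a_def using herm_form_real[OF A x] .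
  have ay: "cinner y (A *\<^sub>v y) = complex_of_real (Re (cinner y (A *\<^sub>v y)))" using herm_form_real[OF A y] .
  have "0 \<le> Re (cinner (y + s \<cdot>\<^sub>v x) (A *\<^sub>v (y + s \<cdot>\<^sub>v x)))"
    using P x y by (intro psd_form) auto
  also have "cinner (y + s \<cdot>\<^sub>v x) (A *\<^sub>v (y + s \<cdot>\<^sub>v x)) =
    cinner y (A *\<^sub>v y) + s * cnj c + cnj s * c + s * cnj s * complex_of_real a"
    using form_expand[OF A x y, of s] ax unfolding c_def by simp
  also have "s * cnj c = - complex_of_real ((cmod c)^2 / a)"
    unfolding s_def using a[folded a_def] by (simp add: cnj_mult_self field_simps)
  also have "cnj s * c = - complex_of_real ((cmod c)^2 / a)"
    unfolding s_def using a[folded a_def] by (simp add: field_simps mult.commute[of c] cnj_mult_self)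
  also have "s * cnj s * complex_of_real a = complex_of_real ((cmod c)^2 / a)"
  proof -
    have "cmod s = cmod c / a" unfolding s_def using a[folded a_def] by (simp add: norm_divide)
    hence "s * cnj s = complex_of_real ((cmod c)^2 / a^2)" using cnj_mult_self[of s] by (simp add: power_divide)
    moreover have "(cmod c)^2 / a^2 * a = (cmod c)^2 / a" using a[folded a_def] by (simp add: power2_eq_square)
    ultimately show ?thesis by (metis of_real_mult)
  qed
  finally have "0 \<le> Re (cinner y (A *\<^sub>v y)) - (cmod c)^2 / a" by simp
  hence "(cmod c)^2 / a \<le> Re (cinner y (A *\<^sub>v y))" by simp
  thus ?thesis using a[folded a_def] unfolding c_def a_def[symmetric] by (simp add: divide_le_eq mult.commute)
qed

lemma psd_quad_zero: assumes P: "psd n A" and v: "v \<in> carrier_vec n" and z: "Re (cinner v (A *\<^sub>v v)) = 0"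
  shows "A *\<^sub>v v = 0\<^sub>v n"
proof (rule ccontr)
  assume ne: "A *\<^sub>v v \<noteq> 0\<^sub>v n"
  have A: "A \<in> carrier_mat n n" "cadj A = A" using P by (auto simp: psd_def)
  define w where "w = A *\<^sub>v v"
  have w: "w \<in> carrier_vec n" unfolding w_def using A v by simp
  define q where "q = Re (cinner w w)"
  have qpos: "0 < q"
  proof -
    have "q \<noteq> 0"
    proof
      assume "q = 0"
      hence "cinner w w = 0" unfolding q_def using cinner_self[of w] by (simp add: complex_eq_iff)
      hence "w = 0\<^sub>v (dim_vec w)" by (rule cinner_self_zero)
      hence "w = 0\<^sub>v n" using w by simp
      thus False using ne unfolding w_def by simp
    qed
    thus ?thesis unfolding q_def using cinner_self_ge0[of w] by simp
  qed
  define c where "c = Re (cinner w (A *\<^sub>v w))"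
  have c0: "0 \<le> c" unfolding c_def using psd_form[OF P w] .
  define t where "t = q / (c + 1)"
  have t: "0 < t" unfolding t_def using qpos c0 by simp
  have ww: "cinner w w = complex_of_real q" unfolding q_def using cinner_self[of w] by simp
  have vv: "cinner v (A *\<^sub>v v) = 0" using herm_form_real[OF A v] z by simp
  have "0 \<le> Re (cinner (v + complex_of_real (- t) \<cdot>\<^sub>v w) (A *\<^sub>v (v + complex_of_real (- t) \<cdot>\<^sub>v w)))"
    using P v w by (intro psd_form) auto
  also have "\<dots> = Re (complex_of_real (- t) * complex_of_real q + complex_of_real (- t) * complex_of_real q
      + complex_of_real (- t) * complex_of_real (- t) * cinner w (A *\<^sub>v w))"
    using form_expand[OF A w v, of "complex_of_real (- t)"] vv ww unfolding w_def by simp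
  also have "\<dots> = - 2 * t * q + t * t * c" unfolding c_def by simp
  finally have "2 * t * q \<le> t * (t * c)" by (simp add: algebra_simps)
  hence "2 * q \<le> t * c" using t by simp
  moreover have "t * c < q"
  proof -
    have "t * c = q * (c / (c + 1))" unfolding t_def by simp
    also have "\<dots> < q * 1" using qpos c0 by (intro mult_strict_left_mono) auto
    finally show ?thesis by simp
  qed
  ultimately show False using qpos by simp
qed

lemma cinner_zero_right: "dim_vec v = n \<Longrightarrow> cinner v (0\<^sub>v n) = 0" by (simp add: cinner_def)

lemma psd_sum_zero: assumes "psd n A" "psd n B" "v \<in> carrier_vec n" "(A + B) *\<^sub>v v = 0\<^sub>v n"
  shows "A *\<^sub>v v = 0\<^sub>v n" "B *\<^sub>v v = 0\<^sub>v n"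
proof -
  have A: "A \<in> carrier_mat n n" and B: "B \<in> carrier_mat n n" using assms by (auto simp: psd_def)
  have "cinner v ((A + B) *\<^sub>v v) = cinner v (A *\<^sub>v v) + cinner v (B *\<^sub>v v)"
    using A B assms(3) by (simp add: add_mult_distrib_mat_vec cinner_add_right)
  moreover have "cinner v ((A + B) *\<^sub>v v) = 0" unfolding assms(4) using assms(3) by (simp add: cinner_zero_right)
  ultimately have "Re (cinner v (A *\<^sub>v v)) + Re (cinner v (B *\<^sub>v v)) = 0" by (metis plus_complex.sel(1) zero_complex.sel(1))
  moreover have "0 \<le> Re (cinner v (A *\<^sub>v v))" "0 \<le> Re (cinner v (B *\<^sub>v v))" using assms psd_form by auto
  ultimately have "Re (cinner v (A *\<^sub>v v)) = 0" "Re (cinner v (B *\<^sub>v v)) = 0" by linarith+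
  thus "A *\<^sub>v v = 0\<^sub>v n" "B *\<^sub>v v = 0\<^sub>v n"
    using psd_quad_zero[OF assms(1) assms(3)] psd_quad_zero[OF assms(2) assms(3)] by auto
qed

definition outer :: "complex vec \<Rightarrow> complex mat" where
  "outer u = mat (dim_vec u) (dim_vec u) (\<lambda>(i, j). u $ i * cnj (u $ j))"

lemma outer_carrier[simp]: "u \<in> carrier_vec n \<Longrightarrow> outer u \<in> carrier_mat n n"
  by (auto simp: outer_def)

lemma outer_herm: "cadj (outer u) = outer u"
  by (rule eq_matI) (auto simp: outer_def)

lemma outer_mv: assumes "u \<in> carrier_vec n" "v \<in> carrier_vec n"
  shows "outer u *\<^sub>v v = cinner u v \<cdot>\<^sub>v u"
proof (rule eq_vecI)
  fix i assume "i < dim_vec (cinner u v \<cdot>\<^sub>v u)"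
  hence i: "i < n" using assms by simp
  have "(outer u *\<^sub>v v) $ i = (\<Sum>t<n. u $ i * cnj (u $ t) * v $ t)"
    using assms i by (subst mv_idx[of _ n n]) (auto simp: outer_def)
  also have "\<dots> = cinner u v * u $ i"
    using assms by (simp add: cinner_def sum_distrib_left sum_distrib_right mult.commute mult.left_commute)
  finally show "(outer u *\<^sub>v v) $ i = (cinner u v \<cdot>\<^sub>v u) $ i" using i assms by simp
qed (use assms in \<open>auto simp: outer_def\<close>)

lemma sum_delta_mult: "(k::nat) < m \<Longrightarrow> (\<Sum>t<m. f t * (if t = k then 1 else 0)) = (f k :: complex)"
proof -
  assume k: "k < m"
  have "(\<Sum>t<m. f t * (if t = k then 1 else 0)) = (\<Sum>t<m. if t = k then f t else 0)"
    by (rule sum.cong) auto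
  also have "\<dots> = f k" using k by (subst sum.delta) auto
  finally show ?thesis .
qed

lemma sum_delta_cnj: "(k::nat) < m \<Longrightarrow> (\<Sum>t<m. cnj (if t = k then 1 else 0) * f t) = (f k :: complex)"
proof -
  assume k: "k < m"
  have "(\<Sum>t<m. cnj (if t = k then 1 else 0) * f t) = (\<Sum>t<m. if t = k then f t else 0)"
    by (rule sum.cong) auto
  also have "\<dots> = f k" using k by (subst sum.delta) auto
  finally show ?thesis .
qed

lemma mv_unit: assumes "(A :: complex mat) \<in> carrier_mat n m" "k < m" shows "A *\<^sub>v unit_vec m k = col A k"
proof (rule eq_vecI)
  fix i assume "i < dim_vec (col A k)"
  hence i: "i < n" using assms by simp
  have "(A *\<^sub>v unit_vec m k) $ i = (\<Sum>t<m. A $$ (i, t) * (if t = k then 1 else 0))"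
    using assms i by (subst mv_idx[of _ n m]) auto
  also have "\<dots> = A $$ (i, k)" by (rule sum_delta_mult) (rule assms)
  finally show "(A *\<^sub>v unit_vec m k) $ i = col A k $ i" using i assms by simp
qed (use assms in auto)

lemma cinner_unit: assumes "v \<in> carrier_vec n" "k < n" shows "cinner (unit_vec n k) v = v $ k"
proof -
  show ?thesis using assms by (auto simp: cinner_def sum_delta_cnj)
qed

lemma psd_diag: assumes "psd n A" "k < n"
  shows "A $$ (k, k) = complex_of_real (Re (A $$ (k, k)))" "0 \<le> Re (A $$ (k, k))"
proof -
  have A: "A \<in> carrier_mat n n" "cadj A = A" using assms by (auto simp: psd_def)
  have e: "cinner (unit_vec n k) (A *\<^sub>v unit_vec n k) = A $$ (k, k)"
    using A assms by (simp add: mv_unit cinner_unit)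
  show "A $$ (k, k) = complex_of_real (Re (A $$ (k, k)))"
    using herm_form_real[OF A, of "unit_vec n k"] e assms by simp
  show "0 \<le> Re (A $$ (k, k))" using psd_form[OF assms(1), of "unit_vec n k"] e assms by simp
qed

lemma psd_diag_zero: assumes "psd n A" "k < n" "A $$ (k, k) = 0" "j < n"
  shows "A $$ (j, k) = 0" "A $$ (k, j) = 0"
proof -
  have A: "A \<in> carrier_mat n n" "cadj A = A" using assms by (auto simp: psd_def)
  have e: "cinner (unit_vec n k) (A *\<^sub>v unit_vec n k) = A $$ (k, k)"
    using A assms by (simp add: mv_unit cinner_unit)
  have "A *\<^sub>v unit_vec n k = 0\<^sub>v n"
    using psd_quad_zero[OF assms(1), of "unit_vec n k"] e assms by simp
  hence "col A k = 0\<^sub>v n" using mv_unit[OF A(1) assms(2)] by simp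
  moreover have "A $$ (j, k) = col A k $ j" using A assms by simp
  ultimately show j: "A $$ (j, k) = 0" using assms by simp
  have "A $$ (k, j) = cadj A $$ (k, j)" using A by simp
  also have "\<dots> = cnj (A $$ (j, k))" using A(1) assms(2,4) by simp
  finally show "A $$ (k, j) = 0" using j by simp
qed

lemma outer_dims[simp]: "dim_row (outer u) = dim_vec u" "dim_col (outer u) = dim_vec u"
  by (auto simp: outer_def)

lemma append_col_prod: assumes Y: "Y \<in> carrier_mat n m" and u: "u \<in> carrier_vec n"
  defines "X \<equiv> mat n (Suc m) (\<lambda>(i, j). if j < m then Y $$ (i, j) else u $ i)"
  shows "X \<in> carrier_mat n (Suc m)" "X * cadj X = Y * cadj Y + outer u"
proof -
  show X: "X \<in> carrier_mat n (Suc m)" unfolding X_def by simp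
  show "X * cadj X = Y * cadj Y + outer u"
  proof (rule eq_matI)
    fix i j assume "i < dim_row (Y * cadj Y + outer u)" "j < dim_col (Y * cadj Y + outer u)"
    hence ij: "i < n" "j < n" using Y u by (auto simp: outer_def)
    have "(X * cadj X) $$ (i, j) = (\<Sum>t<Suc m. X $$ (i, t) * cadj X $$ (t, j))"
      using X ij by (intro mult_idx[of _ n "Suc m" _ n]) auto
    also have "\<dots> = (\<Sum>t<m. X $$ (i, t) * cadj X $$ (t, j)) + X $$ (i, m) * cadj X $$ (m, j)"
      by simp
    also have "(\<Sum>t<m. X $$ (i, t) * cadj X $$ (t, j)) = (\<Sum>t<m. Y $$ (i, t) * cadj Y $$ (t, j))"
      using X Y ij by (intro sum.cong) (auto simp: X_def)
    also have "\<dots> = (Y * cadj Y) $$ (i, j)" using Y ij by (intro mult_idx[symmetric, of _ n m _ n]) auto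
    also have "X $$ (i, m) * cadj X $$ (m, j) = outer u $$ (i, j)" using X u ij by (auto simp: X_def outer_def)
    finally show "(X * cadj X) $$ (i, j) = (Y * cadj Y + outer u) $$ (i, j)" using Y u ij by (simp add: outer_def)
  qed (use X Y u in \<open>auto simp: outer_def\<close>)
qed

lemma peel_step: assumes P: "psd n A" and k: "k < n" and nz: "A $$ (k, k) \<noteq> 0"
  defines "a \<equiv> Re (A $$ (k, k))"
  defines "u \<equiv> complex_of_real (1 / sqrt a) \<cdot>\<^sub>v col A k"
  shows "psd n (A - outer u)" "u \<in> carrier_vec n"
    "{i. i < n \<and> (A - outer u) $$ (i, i) \<noteq> 0} \<subset> {i. i < n \<and> A $$ (i, i) \<noteq> 0}"
proof -
  have A: "A \<in> carrier_mat n n" "cadj A = A" using P by (auto simp: psd_def)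
  have Akk: "A $$ (k, k) = complex_of_real a" unfolding a_def using psd_diag[OF P k] by simp
  have "a \<noteq> 0" using nz Akk by auto
  hence apos: "0 < a" using psd_diag(2)[OF P k] unfolding a_def by linarith
  have "col A k \<in> carrier_vec n" using col_carrier_vec[OF k A(1)] .
  thus u: "u \<in> carrier_vec n" unfolding u_def by simp
  have ui: "u $ i = complex_of_real (1 / sqrt a) * A $$ (i, k)" if "i < n" for i
    unfolding u_def using A that k by simp
  have ek: "unit_vec n k \<in> carrier_vec n" by simp
  have Aek: "cinner (unit_vec n k) (A *\<^sub>v unit_vec n k) = complex_of_real a"
    using A k Akk by (simp add: mv_unit cinner_unit)
  show "psd n (A - outer u)"
  proof (rule psdI)
    show "A - outer u \<in> carrier_mat n n" using outer_carrier[OF u] by (rule minus_carrier_mat)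
    show "cadj (A - outer u) = A - outer u" using A u by (simp add: cadj_minus outer_herm)
    fix v :: "complex vec" assume v: "v \<in> carrier_vec n"
    have "cinner v ((A - outer u) *\<^sub>v v) = cinner v (A *\<^sub>v v) - cinner v (outer u *\<^sub>v v)"
      using A u v by (simp add: minus_mult_distrib_mat_vec cinner_minus_right)
    also have "cinner v (outer u *\<^sub>v v) = cinner u v * cinner v u"
      using u v by (simp add: outer_mv cinner_smult_right)
    also have "cinner v u = cnj (cinner u v)" using u v by (intro cinner_cnj) auto
    also have "cinner u v * cnj (cinner u v) = complex_of_real ((cmod (cinner u v))^2)" by (rule cnj_mult_self)
    finally have e1: "Re (cinner v ((A - outer u) *\<^sub>v v)) = Re (cinner v (A *\<^sub>v v)) - (cmod (cinner u v))^2"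
      by simp
    have "cinner (col A k) v = cinner (A *\<^sub>v unit_vec n k) v" using A k by (simp add: mv_unit)
    also have "\<dots> = cinner (unit_vec n k) (A *\<^sub>v v)"
      using cinner_adj[of "cadj A" n n "unit_vec n k" v] A v k by simp
    finally have cu: "cinner u v = complex_of_real (1 / sqrt a) * cinner (unit_vec n k) (A *\<^sub>v v)"
      unfolding u_def by (simp add: cinner_smult_left)
    have "(cmod (cinner u v))^2 = (cmod (cinner (unit_vec n k) (A *\<^sub>v v)))^2 / a"
      unfolding cu using apos by (simp add: norm_mult norm_divide power_divide power_mult_distrib abs_of_pos)
    also have "\<dots> \<le> (a * Re (cinner v (A *\<^sub>v v))) / a"
      using psd_cs[OF P ek v] Aek apos by (intro divide_right_mono) auto
    also have "\<dots> = Re (cinner v (A *\<^sub>v v))" using apos by simp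
    finally show "0 \<le> Re (cinner v ((A - outer u) *\<^sub>v v))" using e1 by simp
  qed
  have Bii: "(A - outer u) $$ (i, i) = A $$ (i, i) - complex_of_real ((cmod (A $$ (i, k)))^2 / a)" if i: "i < n" for i
  proof -
    have "(A - outer u) $$ (i, i) = A $$ (i, i) - u $ i * cnj (u $ i)" using A u i by (simp add: outer_def)
    also have "u $ i * cnj (u $ i) = complex_of_real ((cmod (u $ i))^2)" by (rule cnj_mult_self)
    also have "cmod (u $ i) = cmod (A $$ (i, k)) / sqrt a" using ui[OF i] apos by (simp add: norm_mult norm_divide)
    finally show ?thesis using apos by (simp add: power_divide)
  qed
  have sub: "{i. i < n \<and> (A - outer u) $$ (i, i) \<noteq> 0} \<subseteq> {i. i < n \<and> A $$ (i, i) \<noteq> 0}"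
  proof safe
    fix i assume i: "i < n" and B: "(A - outer u) $$ (i, i) \<noteq> 0" and z: "A $$ (i, i) = 0"
    have "A $$ (i, k) = 0" using psd_diag_zero(2)[OF P i z k] .
    thus False using B Bii[OF i] z by simp
  qed
  have "(A - outer u) $$ (k, k) = 0"
  proof -
    have "(cmod (A $$ (k, k)))^2 / a = a" using Akk apos by (simp add: power2_eq_square)
    thus ?thesis using Bii[OF k] Akk by simp
  qed
  hence "k \<notin> {i. i < n \<and> (A - outer u) $$ (i, i) \<noteq> 0}" by simp
  moreover have "k \<in> {i. i < n \<and> A $$ (i, i) \<noteq> 0}" using k nz by simp
  ultimately show "{i. i < n \<and> (A - outer u) $$ (i, i) \<noteq> 0} \<subset> {i. i < n \<and> A $$ (i, i) \<noteq> 0}"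
    using sub by blast
qed

lemma psd_factor: "psd n A \<Longrightarrow> \<exists>m X. X \<in> carrier_mat n m \<and> A = X * cadj X"
proof (induction "card {i. i < n \<and> A $$ (i, i) \<noteq> 0}" arbitrary: A rule: less_induct)
  case less
  have A: "A \<in> carrier_mat n n" using less.prems by (simp add: psd_def)
  show ?case
  proof (cases "\<exists>k<n. A $$ (k, k) \<noteq> 0")
    case False
    have "A = 0\<^sub>m n 0 * cadj (0\<^sub>m n 0)"
    proof (rule eq_matI)
      fix i j assume "i < dim_row (0\<^sub>m n 0 * cadj (0\<^sub>m n 0 :: complex mat))" "j < dim_col (0\<^sub>m n 0 * cadj (0\<^sub>m n 0 :: complex mat))"
      hence ij: "i < n" "j < n" by auto
      have "A $$ (i, j) = 0" using psd_diag_zero(1)[OF less.prems ij(2) _ ij(1)] False ij by auto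
      thus "A $$ (i, j) = (0\<^sub>m n 0 * cadj (0\<^sub>m n 0)) $$ (i, j)" using ij by (simp add: scalar_prod_def)
    qed (use A in auto)
    thus ?thesis by (intro exI[of _ 0] exI[of _ "0\<^sub>m n 0"]) auto
  next
    case True
    then obtain k where k: "k < n" "A $$ (k, k) \<noteq> 0" by blast
    define u where "u = complex_of_real (1 / sqrt (Re (A $$ (k, k)))) \<cdot>\<^sub>v col A k"
    note st = peel_step[OF less.prems k, folded u_def]
    have "card {i. i < n \<and> (A - outer u) $$ (i, i) \<noteq> 0} < card {i. i < n \<and> A $$ (i, i) \<noteq> 0}"
      using st(3) by (intro psubset_card_mono) auto
    from less.hyps[OF this st(1)] obtain m Y where Y: "Y \<in> carrier_mat n m" "A - outer u = Y * cadj Y" by blast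
    define X where "X = mat n (Suc m) (\<lambda>(i, j). if j < m then Y $$ (i, j) else u $ i)"
    have X: "X \<in> carrier_mat n (Suc m)" "X * cadj X = Y * cadj Y + outer u"
      using append_col_prod[OF Y(1) st(2)] unfolding X_def by auto
    have "A = (A - outer u) + outer u" using A st(2) by (intro eq_matI) (auto simp: outer_def)
    also have "\<dots> = X * cadj X" using X Y by simp
    finally show ?thesis using X by blast
  qed
qed

lemma gram_psd: assumes "X \<in> carrier_mat n m" shows "psd n (X * cadj X)"
proof (rule psdI)
  show "X * cadj X \<in> carrier_mat n n" using assms by auto
  show "cadj (X * cadj X) = X * cadj X" using assms by (simp add: cadj_mult[of _ n m _ n])
  fix v :: "complex vec" assume v: "v \<in> carrier_vec n"
  have cv: "cadj X *\<^sub>v v \<in> carrier_vec m" using assms v by (intro mult_mat_vec_carrier) auto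
  have "cinner v ((X * cadj X) *\<^sub>v v) = cinner v (X *\<^sub>v (cadj X *\<^sub>v v))" using assms v
    by (subst assoc_mult_mat_vec[of _ n m _ n]) auto
  also have "\<dots> = cinner (cadj X *\<^sub>v v) (cadj X *\<^sub>v v)" using cinner_adj[OF assms v cv] by simp
  finally show "0 \<le> Re (cinner v ((X * cadj X) *\<^sub>v v))" using cinner_self_ge0 by simp
qed

lemma lt_mult_aux: "(p::nat) < a \<Longrightarrow> q < b \<Longrightarrow> p * b + q < a * b"
proof -
  assume "p < a" "q < b"
  hence "p * b + q < p * b + b" by simp
  also have "\<dots> = Suc p * b" by simp
  also have "\<dots> \<le> a * b" using \<open>p < a\<close> by (intro mult_right_mono) auto
  finally show ?thesis .
qed

lemma mod_lt_aux: "(i::nat) < a * b \<Longrightarrow> i mod b < b" by (cases "b = 0") auto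

lemma sum_prod_split: "(\<Sum>t<(a::nat) * b. f t) = (\<Sum>p<a. \<Sum>q<b. f (p * b + q))"
proof -
  have "(\<Sum>p<a. \<Sum>q<b. f (p * b + q)) = (\<Sum>x\<in>{..<a} \<times> {..<b}. f (fst x * b + snd x))"
    by (simp add: sum.cartesian_product split_def)
  also have "\<dots> = (\<Sum>t<a * b. f t)"
    by (rule sum.reindex_bij_witness[where i="\<lambda>t. (t div b, t mod b)" and j="\<lambda>x. fst x * b + snd x"])
      (auto simp: less_mult_imp_div_less mod_lt_aux lt_mult_aux)
  finally show ?thesis by simp
qed


lemma div_mod_aux: "(q::nat) < b \<Longrightarrow> (p * b + q) div b = p" "(q::nat) < b \<Longrightarrow> (p * b + q) mod b = q"
  by auto

lemma kron_dims[simp]: "dim_row (kron A B) = dim_row A * dim_row B" "dim_col (kron A B) = dim_col A * dim_col B"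
  by (auto simp: kron_def)

lemma kron_carrier[simp, intro]: "A \<in> carrier_mat na ma \<Longrightarrow> B \<in> carrier_mat nb mb \<Longrightarrow> kron A B \<in> carrier_mat (na * nb) (ma * mb)"
  by (auto simp: kron_def)

lemma kron_idx: "A \<in> carrier_mat na ma \<Longrightarrow> B \<in> carrier_mat nb mb \<Longrightarrow> i < na * nb \<Longrightarrow> j < ma * mb \<Longrightarrow>
  kron A B $$ (i, j) = A $$ (i div nb, j div mb) * B $$ (i mod nb, j mod mb)"
  by (auto simp: kron_def)

lemma div_lt_aux: "(i::nat) < a * b \<Longrightarrow> i div b < a" by (rule less_mult_imp_div_less)
lemma kron_mult: assumes A: "A \<in> carrier_mat na ma" and B: "B \<in> carrier_mat nb mb"
  and C: "C \<in> carrier_mat ma ka" and D: "D \<in> carrier_mat mb kb"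
  shows "kron A B * kron C D = kron (A * C) (B * D)"
proof (rule eq_matI)
  fix i j assume "i < dim_row (kron (A * C) (B * D))" "j < dim_col (kron (A * C) (B * D))"
  hence ij: "i < na * nb" "j < ka * kb" using A B C D by auto
  have i1: "i div nb < na" "i mod nb < nb" "j div kb < ka" "j mod kb < kb" using ij div_lt_aux mod_lt_aux by auto
  have "(kron A B * kron C D) $$ (i, j) = (\<Sum>t<ma * mb. kron A B $$ (i, t) * kron C D $$ (t, j))"
    using A B C D ij by (intro mult_idx[of _ "na * nb" "ma * mb" _ "ka * kb"]) auto
  also have "\<dots> = (\<Sum>p<ma. \<Sum>q<mb. kron A B $$ (i, p * mb + q) * kron C D $$ (p * mb + q, j))"
    by (rule sum_prod_split)
  also have "\<dots> = (\<Sum>p<ma. \<Sum>q<mb. (A $$ (i div nb, p) * C $$ (p, j div kb)) * (B $$ (i mod nb, q) * D $$ (q, j mod kb)))"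
    using A B C D ij lt_mult_aux by (intro sum.cong refl) (auto simp: kron_idx div_mod_aux)
  also have "\<dots> = (\<Sum>p<ma. A $$ (i div nb, p) * C $$ (p, j div kb)) * (\<Sum>q<mb. B $$ (i mod nb, q) * D $$ (q, j mod kb))"
    by (simp add: sum_product)
  also have "\<dots> = (A * C) $$ (i div nb, j div kb) * (B * D) $$ (i mod nb, j mod kb)"
    by (simp only: mult_idx[OF A C i1(1) i1(3)] mult_idx[OF B D i1(2) i1(4)])
  also have "\<dots> = kron (A * C) (B * D) $$ (i, j)"
    using A B C D ij by (subst kron_idx[of _ na ka _ nb kb]) auto
  finally show "(kron A B * kron C D) $$ (i, j) = kron (A * C) (B * D) $$ (i, j)" .
qed (use A B C D in auto)

lemma cadj_kron: assumes A: "A \<in> carrier_mat na ma" and B: "B \<in> carrier_mat nb mb"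
  shows "cadj (kron A B) = kron (cadj A) (cadj B)"
proof (rule eq_matI)
  fix i j assume "i < dim_row (kron (cadj A) (cadj B))" "j < dim_col (kron (cadj A) (cadj B))"
  hence ij: "i < ma * mb" "j < na * nb" using A B by auto
  have i1: "i div mb < ma" "i mod mb < mb" "j div nb < na" "j mod nb < nb" using ij div_lt_aux mod_lt_aux by auto
  show "cadj (kron A B) $$ (i, j) = kron (cadj A) (cadj B) $$ (i, j)"
    using A B ij i1 by (simp add: kron_idx[of _ na ma _ nb mb] kron_idx[of _ ma na _ mb nb])
qed (use A B in auto)

lemma kron_one: "kron (1\<^sub>m a) (1\<^sub>m b) = 1\<^sub>m (a * b)"
proof (rule eq_matI)
  fix i j assume "i < dim_row (1\<^sub>m (a * b) :: complex mat)" "j < dim_col (1\<^sub>m (a * b) :: complex mat)"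
  hence ij: "i < a * b" "j < a * b" by auto
  have i1: "i div b < a" "i mod b < b" "j div b < a" "j mod b < b" using ij div_lt_aux mod_lt_aux by auto
  have "(i div b = j div b \<and> i mod b = j mod b) = (i = j)" by (metis div_mult_mod_eq)
  thus "kron (1\<^sub>m a) (1\<^sub>m b) $$ (i, j) = (1\<^sub>m (a * b) :: complex mat) $$ (i, j)"
    using ij i1 by (auto simp: kron_idx[of _ a a _ b b])
qed auto

lemma kron_psd: assumes "psd na A" "psd nb B" shows "psd (na * nb) (kron A B)"
proof -
  obtain m1 X where X: "X \<in> carrier_mat na m1" "A = X * cadj X" using psd_factor[OF assms(1)] by blast
  obtain m2 Y where Y: "Y \<in> carrier_mat nb m2" "B = Y * cadj Y" using psd_factor[OF assms(2)] by blast
  have "kron A B = kron X Y * kron (cadj X) (cadj Y)"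
    using X Y by (simp add: kron_mult[of _ na m1 _ nb m2 _ na _ nb])
  also have "\<dots> = kron X Y * cadj (kron X Y)" using X Y by (simp add: cadj_kron)
  finally show ?thesis using gram_psd[of "kron X Y" "na * nb" "m1 * m2"] X Y by simp
qed

definition fixset :: "nat \<Rightarrow> complex mat \<Rightarrow> complex vec set" where
  "fixset n P = {x \<in> carrier_vec n. P *\<^sub>v x = x}"

definition trunc :: "complex mat \<Rightarrow> nat \<Rightarrow> complex mat" where
  "trunc A k = mat (dim_row A) k (\<lambda>(i, j). A $$ (i, j))"

lemma trunc_carrier: "trunc A k \<in> carrier_mat (dim_row A) k" by (simp add: trunc_def)

lemma trunc_full: "A \<in> carrier_mat n m \<Longrightarrow> trunc A m = A"
  by (rule eq_matI) (auto simp: trunc_def)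

lemma vec_eqI_carrier: "v \<in> carrier_vec n \<Longrightarrow> w \<in> carrier_vec n \<Longrightarrow> (\<And>i. i < n \<Longrightarrow> v $ i = w $ i) \<Longrightarrow> v = w"
  by (rule eq_vecI) auto

lemma trunc_carrier': "A \<in> carrier_mat n m \<Longrightarrow> trunc A k \<in> carrier_mat n k"
  by (simp add: trunc_def)

lemma trunc_step_mv: assumes A: "A \<in> carrier_mat n m" and k: "k < m" and c: "c \<in> carrier_vec (Suc k)"
  shows "trunc A (Suc k) *\<^sub>v c = trunc A k *\<^sub>v vec k (\<lambda>j. c $ j) + (c $ k) \<cdot>\<^sub>v col A k"
proof -
  have tk: "trunc A k \<in> carrier_mat n k" "trunc A (Suc k) \<in> carrier_mat n (Suc k)"
    using A by (auto intro: trunc_carrier')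
  have ck: "col A k \<in> carrier_vec n" using A k by simp
  have vk: "vec k (\<lambda>j. c $ j) \<in> carrier_vec k" by simp
  show ?thesis
  proof (rule vec_eqI_carrier[of _ n])
    show "trunc A (Suc k) *\<^sub>v c \<in> carrier_vec n" using tk(2) c by (rule mult_mat_vec_carrier)
    show "trunc A k *\<^sub>v vec k (\<lambda>j. c $ j) + (c $ k) \<cdot>\<^sub>v col A k \<in> carrier_vec n"
      using mult_mat_vec_carrier[OF tk(1) vk] ck by simp
    fix i assume i: "i < n"
    have "(trunc A (Suc k) *\<^sub>v c) $ i = (\<Sum>j<Suc k. trunc A (Suc k) $$ (i, j) * c $ j)"
      using tk c i by (intro mv_idx) auto
    also have "\<dots> = (\<Sum>j<k. A $$ (i, j) * c $ j) + A $$ (i, k) * c $ k"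
      using A i k by (simp add: trunc_def)
    also have "(\<Sum>j<k. A $$ (i, j) * c $ j) = (trunc A k *\<^sub>v vec k (\<lambda>j. c $ j)) $ i"
      using mv_idx[OF tk(1) vk i] A i by (simp add: trunc_def)
    also have "A $$ (i, k) * c $ k = ((c $ k) \<cdot>\<^sub>v col A k) $ i" using A i k by simp
    also have "(trunc A k *\<^sub>v vec k (\<lambda>j. c $ j)) $ i + ((c $ k) \<cdot>\<^sub>v col A k) $ i
       = (trunc A k *\<^sub>v vec k (\<lambda>j. c $ j) + (c $ k) \<cdot>\<^sub>v col A k) $ i"
      using i ck A by (intro index_add_vec(1)[symmetric]) simp
    finally show "(trunc A (Suc k) *\<^sub>v c) $ i = (trunc A k *\<^sub>v vec k (\<lambda>j. c $ j) + (c $ k) \<cdot>\<^sub>v col A k) $ i" .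
  qed
qed

lemma trunc_range_step: assumes A: "A \<in> carrier_mat n m" and k: "k < m"
  shows "mat_range (trunc A (Suc k)) = {y + t \<cdot>\<^sub>v col A k | y t. y \<in> mat_range (trunc A k)}"
proof safe
  fix x assume "x \<in> mat_range (trunc A (Suc k))"
  then obtain c where c: "c \<in> carrier_vec (Suc k)" "x = trunc A (Suc k) *\<^sub>v c"
    unfolding mat_range_def by (auto simp: trunc_def)
  have "trunc A k *\<^sub>v vec k (\<lambda>j. c $ j) \<in> mat_range (trunc A k)"
    unfolding mat_range_def by (auto simp: trunc_def)
  thus "\<exists>y t. x = y + t \<cdot>\<^sub>v col A k \<and> y \<in> mat_range (trunc A k)"
    using trunc_step_mv[OF A k c(1)] c(2) by blast
next
  fix y t assume "y \<in> mat_range (trunc A k)"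
  then obtain c' where c': "c' \<in> carrier_vec k" "y = trunc A k *\<^sub>v c'"
    unfolding mat_range_def by (auto simp: trunc_def)
  define c where "c = vec (Suc k) (\<lambda>j. if j < k then c' $ j else t)"
  have c: "c \<in> carrier_vec (Suc k)" unfolding c_def by simp
  have "vec k (\<lambda>j. c $ j) = c'" using c' unfolding c_def by (intro eq_vecI) auto
  moreover have "c $ k = t" unfolding c_def by simp
  ultimately have "trunc A (Suc k) *\<^sub>v c = y + t \<cdot>\<^sub>v col A k" using trunc_step_mv[OF A k c] c' by simp
  moreover have "dim_col (trunc A (Suc k)) = Suc k" by (simp add: trunc_def)
  ultimately have "y + t \<cdot>\<^sub>v col A k = trunc A (Suc k) *\<^sub>v c \<and> c \<in> carrier_vec (dim_col (trunc A (Suc k)))"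
    using c by simp
  thus "y + t \<cdot>\<^sub>v col A k \<in> mat_range (trunc A (Suc k))"
    unfolding mat_range_def by blast
qed

lemma trunc_range_0: "mat_range (trunc A 0) = {0\<^sub>v (dim_row A)}"
proof -
  have e: "trunc A 0 *\<^sub>v c = 0\<^sub>v (dim_row A)" if "c \<in> carrier_vec 0" for c
    using that by (intro eq_vecI) (auto simp: trunc_def scalar_prod_def)
  have d: "dim_col (trunc A 0) = 0" by (simp add: trunc_def)
  have "0\<^sub>v (dim_row A) = trunc A 0 *\<^sub>v 0\<^sub>v 0 \<and> (0\<^sub>v 0 :: complex vec) \<in> carrier_vec (dim_col (trunc A 0))"
    using e[of "0\<^sub>v 0"] d by simp
  hence "0\<^sub>v (dim_row A) \<in> mat_range (trunc A 0)" unfolding mat_range_def by blast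
  moreover have "mat_range (trunc A 0) \<subseteq> {0\<^sub>v (dim_row A)}" unfolding mat_range_def using e d by auto
  ultimately show ?thesis by blast
qed

lemma mat_eq_by_vec: assumes A: "(A :: complex mat) \<in> carrier_mat n m" and B: "B \<in> carrier_mat n m"
  and eq: "\<And>x. x \<in> carrier_vec m \<Longrightarrow> A *\<^sub>v x = B *\<^sub>v x" shows "A = B"
proof (rule eq_matI)
  fix i j assume "i < dim_row B" "j < dim_col B"
  hence ij: "i < n" "j < m" using B by auto
  have "col A j = col B j" using eq[of "unit_vec m j"] mv_unit[OF A ij(2)] mv_unit[OF B ij(2)] by simp
  hence "col A j $ i = col B j $ i" by simp
  thus "A $$ (i, j) = B $$ (i, j)" using A B ij by simp
qed (use A B in auto)

lemma proj_ex_aux: assumes A: "A \<in> carrier_mat n m"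
  shows "k \<le> m \<Longrightarrow> \<exists>P. P \<in> carrier_mat n n \<and> P * P = P \<and> cadj P = P \<and>
     (\<forall>x \<in> carrier_vec n. P *\<^sub>v x \<in> fixset n P) \<and> fixset n P = mat_range (trunc A k)"
proof (induction k)
  case 0
  have z: "0\<^sub>m n n *\<^sub>v x = 0\<^sub>v n" if "x \<in> carrier_vec n" for x :: "complex vec"
    using that by (intro eq_vecI) (auto simp: scalar_prod_def)
  have "fixset n (0\<^sub>m n n) = {0\<^sub>v n}" unfolding fixset_def using z by auto
  moreover have "0\<^sub>m n n * 0\<^sub>m n n = (0\<^sub>m n n :: complex mat)" by simp
  moreover have "\<forall>x \<in> carrier_vec n. 0\<^sub>m n n *\<^sub>v x \<in> fixset n (0\<^sub>m n n)" using z by (auto simp: fixset_def)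
  ultimately show ?case using trunc_range_0[of A] A by (intro exI[of _ "0\<^sub>m n n"]) auto
next
  case (Suc k)
  hence k: "k < m" by simp
  from Suc obtain P' where P': "P' \<in> carrier_mat n n" "P' * P' = P'" "cadj P' = P'"
    "\<forall>x \<in> carrier_vec n. P' *\<^sub>v x \<in> fixset n P'" "fixset n P' = mat_range (trunc A k)" by auto
  define v where "v = col A k"
  have v: "v \<in> carrier_vec n" unfolding v_def using A k by simp
  define R where "R = {y + t \<cdot>\<^sub>v v | y t. y \<in> fixset n P'}"
  have RR: "mat_range (trunc A (Suc k)) = R" unfolding R_def v_def P'(5) by (rule trunc_range_step[OF A k])
  have PP': "P' *\<^sub>v (P' *\<^sub>v x) = P' *\<^sub>v x" if "x \<in> carrier_vec n" for x
    using assoc_mult_mat_vec[OF P'(1) P'(1) that] P'(2) by simp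
  have Rc: "R \<subseteq> carrier_vec n" unfolding R_def fixset_def using v by auto
  define r where "r = v - P' *\<^sub>v v"
  have r: "r \<in> carrier_vec n" unfolding r_def using v P' by simp
  show ?case
  proof (cases "r = 0\<^sub>v n")
    case True
    have vfix: "P' *\<^sub>v v = v"
    proof (rule vec_eqI_carrier[of _ n])
      fix i assume i: "i < n"
      have "r $ i = 0" using True i by simp
      thus "(P' *\<^sub>v v) $ i = v $ i" using i v P' unfolding r_def by simp
    qed (use v P' in auto)
    have "fixset n P' = R"
    proof safe
      fix x assume x: "x \<in> fixset n P'"
      have "x = x + 0 \<cdot>\<^sub>v v" using x v unfolding fixset_def by (intro eq_vecI) auto
      thus "x \<in> R" unfolding R_def using x by blast
    next
      fix x assume "x \<in> R"
      then obtain y t where y: "y \<in> fixset n P'" "x = y + t \<cdot>\<^sub>v v" unfolding R_def by blast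
      have yc: "y \<in> carrier_vec n" "P' *\<^sub>v y = y" using y(1) unfolding fixset_def by auto
      have "P' *\<^sub>v x = P' *\<^sub>v y + t \<cdot>\<^sub>v (P' *\<^sub>v v)" unfolding y(2) using P'(1) yc(1) v
        by (simp add: mult_add_distrib_mat_vec mult_mat_vec)
      also have "\<dots> = x" using y(2) yc vfix by simp
      finally show "x \<in> fixset n P'" using y(2) yc v unfolding fixset_def by simp
    qed
    thus ?thesis using P' RR by (intro exI[of _ P']) auto
  next
    case False
    define nr where "nr = Re (cinner r r)"
    have "cinner r r \<noteq> 0" using cinner_self_zero[of r] False r by auto
    have rr: "cinner r r = complex_of_real nr" unfolding nr_def using cinner_self[of r] by simp
    have "nr \<noteq> 0" using rr \<open>cinner r r \<noteq> 0\<close> by auto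
    hence nrpos: "0 < nr" unfolding nr_def using cinner_self_ge0[of r] by linarith
    define P where "P = P' + complex_of_real (1 / nr) \<cdot>\<^sub>m outer r"
    have Pc: "P \<in> carrier_mat n n" unfolding P_def using P' r by simp
    have Pmv: "P *\<^sub>v x = P' *\<^sub>v x + (complex_of_real (1 / nr) * cinner r x) \<cdot>\<^sub>v r" if x: "x \<in> carrier_vec n" for x
    proof -
      have "P *\<^sub>v x = P' *\<^sub>v x + (complex_of_real (1 / nr) \<cdot>\<^sub>m outer r) *\<^sub>v x"
        unfolding P_def using P' r x by (intro add_mult_distrib_mat_vec[of _ n n]) auto
      also have "(complex_of_real (1 / nr) \<cdot>\<^sub>m outer r) *\<^sub>v x = complex_of_real (1 / nr) \<cdot>\<^sub>v (cinner r x \<cdot>\<^sub>v r)"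
        using r x by (simp add: smult_mat_mv outer_mv)
      also have "\<dots> = (complex_of_real (1 / nr) * cinner r x) \<cdot>\<^sub>v r" by (simp add: smult_smult_assoc)
      finally show ?thesis .
    qed
    have P'r: "P' *\<^sub>v r = 0\<^sub>v n"
    proof -
      have "P' *\<^sub>v r = P' *\<^sub>v v - P' *\<^sub>v (P' *\<^sub>v v)" unfolding r_def using P' v
        by (intro mult_minus_distrib_mat_vec) auto
      also have "\<dots> = 0\<^sub>v n" using PP'[OF v] P' v by (intro eq_vecI) auto
      finally show ?thesis .
    qed
    have orth: "cinner r y = 0" if y: "y \<in> fixset n P'" for y
    proof -
      have yc: "y \<in> carrier_vec n" and yy: "P' *\<^sub>v y = y" using y unfolding fixset_def by auto
      have "cinner r y = cinner r (P' *\<^sub>v y)" using yy by simp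
      also have "\<dots> = cinner (P' *\<^sub>v r) y" using cinner_adj[OF P'(1) r yc] P'(3) by simp
      also have "\<dots> = 0" using P'r yc by (simp add: cinner_def)
      finally show ?thesis .
    qed
    have P'v_fix: "P' *\<^sub>v v \<in> fixset n P'" using P'(4) v by blast
    have rv: "cinner r v = complex_of_real nr"
    proof -
      have "v = r + P' *\<^sub>v v" unfolding r_def using v P' by (intro eq_vecI) auto
      hence "cinner r v = cinner r (r + P' *\<^sub>v v)" by simp
      also have "\<dots> = cinner r r + cinner r (P' *\<^sub>v v)" using r v P' by (intro cinner_add_right) auto
      finally show ?thesis using orth[OF P'v_fix] rr by simp
    qed
    have R_fix: "x \<in> fixset n P" if x: "x \<in> R" for x
    proof -
      obtain y t where y: "y \<in> fixset n P'" "x = y + t \<cdot>\<^sub>v v" using x unfolding R_def by blast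
      have yc: "y \<in> carrier_vec n" and yy: "P' *\<^sub>v y = y" using y unfolding fixset_def by auto
      have xc: "x \<in> carrier_vec n" using y yc v by simp
      have "cinner r x = cinner r y + cinner r (t \<cdot>\<^sub>v v)" using y(2) r yc v by (simp add: cinner_add_right)
      also have "\<dots> = t * complex_of_real nr" using orth[OF y(1)] rv r v by (simp add: cinner_smult_right)
      finally have rx: "cinner r x = t * complex_of_real nr" .
      have "P' *\<^sub>v x = y + t \<cdot>\<^sub>v (P' *\<^sub>v v)" using y(2) P' yc v yy
        by (simp add: mult_add_distrib_mat_vec mult_mat_vec)
      hence "P *\<^sub>v x = y + t \<cdot>\<^sub>v (P' *\<^sub>v v) + t \<cdot>\<^sub>v r" using Pmv[OF xc] rx nrpos by simp
      also have "\<dots> = x" unfolding y(2) r_def using yc v P'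
        by (intro eq_vecI) (auto simp: algebra_simps)
      finally show ?thesis using xc unfolding fixset_def by simp
    qed
    have P_in_R: "P *\<^sub>v x \<in> R" if x: "x \<in> carrier_vec n" for x
    proof -
      define s where "s = complex_of_real (1 / nr) * cinner r x"
      define y where "y = P' *\<^sub>v x - s \<cdot>\<^sub>v (P' *\<^sub>v v)"
      have yc: "y \<in> carrier_vec n" unfolding y_def using P' x v by simp
      have "P' *\<^sub>v y = P' *\<^sub>v (P' *\<^sub>v x) - s \<cdot>\<^sub>v (P' *\<^sub>v (P' *\<^sub>v v))" unfolding y_def using P' x v
        by (simp add: mult_minus_distrib_mat_vec mult_mat_vec)
      also have "\<dots> = y" unfolding y_def using PP'[OF x] PP'[OF v] by simp
      finally have "y \<in> fixset n P'" using yc unfolding fixset_def by simp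
      moreover have "P *\<^sub>v x = y + s \<cdot>\<^sub>v v"
      proof -
        have "P *\<^sub>v x = P' *\<^sub>v x + s \<cdot>\<^sub>v r" unfolding s_def by (rule Pmv[OF x])
        also have "\<dots> = y + s \<cdot>\<^sub>v v" unfolding y_def r_def using P' x v
          by (intro eq_vecI) (auto simp: algebra_simps)
        finally show ?thesis .
      qed
      ultimately show ?thesis unfolding R_def by blast
    qed
    have fixR: "fixset n P = R"
    proof safe
      fix x assume "x \<in> fixset n P"
      hence "x \<in> carrier_vec n" "P *\<^sub>v x = x" unfolding fixset_def by auto
      thus "x \<in> R" using P_in_R by metis
    qed (rule R_fix)
    have PP: "P * P = P"
    proof (rule mat_eq_by_vec[of _ n n])
      show "P * P \<in> carrier_mat n n" using Pc by simp
      fix x :: "complex vec" assume x: "x \<in> carrier_vec n"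
      have "(P * P) *\<^sub>v x = P *\<^sub>v (P *\<^sub>v x)" using Pc x by simp
      also have "\<dots> = P *\<^sub>v x" using R_fix[OF P_in_R[OF x]] unfolding fixset_def by simp
      finally show "(P * P) *\<^sub>v x = P *\<^sub>v x" .
    qed (rule Pc)
    have herm: "cadj P = P" unfolding P_def using P' r
      by (simp add: cadj_add[of _ n n] cadj_smult outer_herm)
    show ?thesis using Pc PP herm P_in_R R_fix RR fixR by (intro exI[of _ P]) auto
  qed
qed

lemma proj_mat_range: assumes "P \<in> carrier_mat n n" "P * P = P" shows "mat_range P = fixset n P"
proof safe
  fix x assume "x \<in> mat_range P"
  then obtain c where c: "c \<in> carrier_vec n" "x = P *\<^sub>v c" unfolding mat_range_def using assms by auto
  have "P *\<^sub>v x = (P * P) *\<^sub>v c" using c(2) assoc_mult_mat_vec[OF assms(1) assms(1) c(1)] by simp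
  thus "x \<in> fixset n P" using c assms unfolding fixset_def by simp
next
  fix x assume "x \<in> fixset n P"
  hence "x = P *\<^sub>v x \<and> x \<in> carrier_vec (dim_col P)" unfolding fixset_def using assms by auto
  thus "x \<in> mat_range P" unfolding mat_range_def by blast
qed

lemma range_proj_ex: assumes A: "A \<in> carrier_mat n m"
  shows "\<exists>P. is_orth_proj n P (mat_range A)"
proof -
  obtain P where P: "P \<in> carrier_mat n n" "P * P = P" "cadj P = P" "fixset n P = mat_range (trunc A m)"
    using proj_ex_aux[OF A, of m] by auto
  hence "mat_range P = mat_range A" using proj_mat_range[OF P(1,2)] trunc_full[OF A] by simp
  thus ?thesis using P unfolding is_orth_proj_def by blast
qed

lemma orth_proj_unique: assumes P1: "is_orth_proj n P1 S" and P2: "is_orth_proj n P2 S" shows "P1 = P2"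
proof -
  have c: "P1 \<in> carrier_mat n n" "P2 \<in> carrier_mat n n" "P1 * P1 = P1" "P2 * P2 = P2" "cadj P1 = P1" "cadj P2 = P2"
    using P1 P2 unfolding is_orth_proj_def by auto
  have f: "fixset n P1 = fixset n P2" using P1 P2 proj_mat_range[OF c(1,3)] proj_mat_range[OF c(2,4)]
    unfolding is_orth_proj_def by simp
  have e1: "P1 * P2 = P2" if "Pa \<in> carrier_mat n n" "Pb \<in> carrier_mat n n" "Pb * Pb = Pb" "fixset n Pa = fixset n Pb"
    "Pa = P1" "Pb = P2" for Pa Pb
  proof (rule mat_eq_by_vec[of _ n n])
    fix x :: "complex vec" assume x: "x \<in> carrier_vec n"
    have "P2 *\<^sub>v x \<in> fixset n P2" using c x unfolding fixset_def by (simp flip: assoc_mult_mat_vec)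
    hence "P1 *\<^sub>v (P2 *\<^sub>v x) = P2 *\<^sub>v x" using f unfolding fixset_def by auto
    thus "(P1 * P2) *\<^sub>v x = P2 *\<^sub>v x" using c x by simp
  qed (use c in auto)
  have e2: "P2 * P1 = P1"
  proof (rule mat_eq_by_vec[of _ n n])
    fix x :: "complex vec" assume x: "x \<in> carrier_vec n"
    have "P1 *\<^sub>v x \<in> fixset n P1" using c x unfolding fixset_def by (simp flip: assoc_mult_mat_vec)
    hence "P2 *\<^sub>v (P1 *\<^sub>v x) = P1 *\<^sub>v x" using f unfolding fixset_def by auto
    thus "(P2 * P1) *\<^sub>v x = P1 *\<^sub>v x" using c x by simp
  qed (use c in auto)
  have "P2 = cadj (P1 * P2)" using e1[OF c(1,2,4) f refl refl] c by simp
  also have "\<dots> = cadj P2 * cadj P1" using c by (intro cadj_mult) auto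
  also have "\<dots> = P1" using c e2 by simp
  finally show ?thesis by simp
qed

lemma supp_proj_props: assumes A: "A \<in> carrier_mat n n"
  shows "is_orth_proj n (supp_proj A) (mat_range A)"
proof -
  obtain P where P: "is_orth_proj n P (mat_range A)" using range_proj_ex[OF A] by blast
  have "supp_proj A = orth_proj n (mat_range A)" unfolding supp_proj_def using A by simp
  also have "\<dots> = P" unfolding orth_proj_def using P orth_proj_unique by blast
  finally show ?thesis using P by simp
qed

lemma one_minus_mv: "(P :: complex mat) \<in> carrier_mat n n \<Longrightarrow> y \<in> carrier_vec n \<Longrightarrow> (1\<^sub>m n - P) *\<^sub>v y = y - P *\<^sub>v y"
proof -
  assume P: "P \<in> carrier_mat n n" and y: "y \<in> carrier_vec n"
  have "(1\<^sub>m n - P) *\<^sub>v y = 1\<^sub>m n *\<^sub>v y - P *\<^sub>v y" using P y by (intro minus_mult_distrib_mat_vec) auto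
  thus ?thesis using y by simp
qed

lemma cinner_zero_left: "cinner (0\<^sub>v n) w = 0" by (simp add: cinner_def)

lemma orth_projD: assumes "is_orth_proj n P S"
  shows "P \<in> carrier_mat n n" "P * P = P" "cadj P = P" "fixset n P = S"
  using assms proj_mat_range[of P n] unfolding is_orth_proj_def by auto

lemma supp_proj_fix: assumes A: "A \<in> carrier_mat n n"
  shows "supp_proj A \<in> carrier_mat n n" "supp_proj A * supp_proj A = supp_proj A" "cadj (supp_proj A) = supp_proj A"
    "fixset n (supp_proj A) = mat_range A"
  using orth_projD[OF supp_proj_props[OF A]] by auto

lemma ker_proj_eq: assumes A: "A \<in> carrier_mat n n" and h: "cadj A = A"
  shows "ker_proj A = 1\<^sub>m n - supp_proj A" "is_orth_proj n (1\<^sub>m n - supp_proj A) (mat_kernel A)"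
proof -
  define P where "P = supp_proj A"
  note Pf = supp_proj_fix[OF A, folded P_def]
  define Q where "Q = 1\<^sub>m n - P"
  have Qc: "Q \<in> carrier_mat n n" unfolding Q_def using Pf(1) by (rule minus_carrier_mat)
  have Qmv: "Q *\<^sub>v y = y - P *\<^sub>v y" if "y \<in> carrier_vec n" for y
    unfolding Q_def using Pf(1) that by (rule one_minus_mv)
  have PP: "P *\<^sub>v (P *\<^sub>v y) = P *\<^sub>v y" if "y \<in> carrier_vec n" for y
    using assoc_mult_mat_vec[OF Pf(1) Pf(1) that] Pf(2) by simp
  have QQ: "Q * Q = Q"
  proof (rule mat_eq_by_vec[of _ n n])
    fix x :: "complex vec" assume x: "x \<in> carrier_vec n"
    have "(Q * Q) *\<^sub>v x = Q *\<^sub>v (Q *\<^sub>v x)" using Qc x by simp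
    also have "\<dots> = (x - P *\<^sub>v x) - P *\<^sub>v (x - P *\<^sub>v x)" using Qmv x Pf by simp
    also have "P *\<^sub>v (x - P *\<^sub>v x) = P *\<^sub>v x - P *\<^sub>v (P *\<^sub>v x)" using Pf x by (intro mult_minus_distrib_mat_vec) auto
    also have "(x - P *\<^sub>v x) - (P *\<^sub>v x - P *\<^sub>v (P *\<^sub>v x)) = Q *\<^sub>v x" unfolding PP[OF x] Qmv[OF x]
      using x Pf by (intro eq_vecI) auto
    finally show "(Q * Q) *\<^sub>v x = Q *\<^sub>v x" .
  qed (use Qc in auto)
  have Qh: "cadj Q = Q" unfolding Q_def using cadj_minus[OF one_carrier_mat Pf(1)] Pf(3) by simp
  have key: "P *\<^sub>v x = 0\<^sub>v n \<longleftrightarrow> A *\<^sub>v x = 0\<^sub>v n" if x: "x \<in> carrier_vec n" for x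
  proof
    assume Px: "P *\<^sub>v x = 0\<^sub>v n"
    have AAx: "A *\<^sub>v (A *\<^sub>v x) \<in> mat_range A" unfolding mat_range_def using A x by auto
    hence fixA: "P *\<^sub>v (A *\<^sub>v (A *\<^sub>v x)) = A *\<^sub>v (A *\<^sub>v x)" using Pf(4) unfolding fixset_def by auto
    have Axc: "A *\<^sub>v x \<in> carrier_vec n" "A *\<^sub>v (A *\<^sub>v x) \<in> carrier_vec n" using A x by auto
    have "cinner (A *\<^sub>v x) (A *\<^sub>v x) = cinner x (A *\<^sub>v (A *\<^sub>v x))"
      using cinner_adj[OF A x Axc(1)] h by simp
    also have "\<dots> = cinner x (P *\<^sub>v (A *\<^sub>v (A *\<^sub>v x)))" using fixA by simp
    also have "\<dots> = cinner (P *\<^sub>v x) (A *\<^sub>v (A *\<^sub>v x))" using cinner_adj[OF Pf(1) x Axc(2)] Pf(3) by simp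
    also have "\<dots> = 0" using Px by (simp add: cinner_zero_left)
    finally have "A *\<^sub>v x = 0\<^sub>v (dim_vec (A *\<^sub>v x))" by (rule cinner_self_zero)
    thus "A *\<^sub>v x = 0\<^sub>v n" using A by simp
  next
    assume Ax: "A *\<^sub>v x = 0\<^sub>v n"
    have Pxc: "P *\<^sub>v x \<in> carrier_vec n" using Pf x by auto
    have "P *\<^sub>v x \<in> fixset n P" using PP[OF x] Pxc unfolding fixset_def by simp
    then obtain c where c: "c \<in> carrier_vec n" "P *\<^sub>v x = A *\<^sub>v c" using Pf(4) A unfolding mat_range_def by auto
    have "cinner (P *\<^sub>v x) (P *\<^sub>v x) = cinner x (P *\<^sub>v (P *\<^sub>v x))"
      using cinner_adj[OF Pf(1) x Pxc] Pf(3) by simp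
    also have "\<dots> = cinner x (A *\<^sub>v c)" using PP[OF x] c by simp
    also have "\<dots> = cinner (A *\<^sub>v x) c" using cinner_adj[OF A x c(1)] h by simp
    also have "\<dots> = 0" using Ax by (simp add: cinner_zero_left)
    finally have "P *\<^sub>v x = 0\<^sub>v (dim_vec (P *\<^sub>v x))" by (rule cinner_self_zero)
    thus "P *\<^sub>v x = 0\<^sub>v n" using Pf by simp
  qed
  have "fixset n Q = mat_kernel A"
  proof safe
    fix x assume "x \<in> fixset n Q"
    hence x: "x \<in> carrier_vec n" "x - P *\<^sub>v x = x" unfolding fixset_def using Qmv by auto
    have "P *\<^sub>v x = 0\<^sub>v n"
    proof (rule vec_eqI_carrier[of _ n])
      fix i assume i: "i < n"
      have "(x - P *\<^sub>v x) $ i = x $ i" using x by simp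
      moreover have "(x - P *\<^sub>v x) $ i = x $ i - (P *\<^sub>v x) $ i" using i Pf(1) by simp
      ultimately have "(P *\<^sub>v x) $ i = 0" by simp
      thus "(P *\<^sub>v x) $ i = 0\<^sub>v n $ i" using i by simp
    qed (use Pf x in auto)
    thus "x \<in> mat_kernel A" using key[OF x(1)] x A unfolding mat_kernel_def by auto
  next
    fix x assume "x \<in> mat_kernel A"
    hence x: "x \<in> carrier_vec n" "A *\<^sub>v x = 0\<^sub>v n" unfolding mat_kernel_def using A by auto
    have "Q *\<^sub>v x = x" using Qmv[OF x(1)] key[OF x(1)] x by simp
    thus "x \<in> fixset n Q" using x unfolding fixset_def by simp
  qed
  hence "mat_range Q = mat_kernel A" using proj_mat_range[OF Qc QQ] by simp
  hence io: "is_orth_proj n Q (mat_kernel A)" unfolding is_orth_proj_def using Qc QQ Qh by simp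
  thus "is_orth_proj n (1\<^sub>m n - supp_proj A) (mat_kernel A)" unfolding Q_def P_def .
  have "ker_proj A = orth_proj n (mat_kernel A)" unfolding ker_proj_def using A by simp
  also have "\<dots> = Q" unfolding orth_proj_def using io orth_proj_unique by blast
  finally show "ker_proj A = 1\<^sub>m n - supp_proj A" unfolding Q_def P_def .
qed

lemma range_factor: assumes A: "A \<in> carrier_mat n m" and P: "P \<in> carrier_mat n k"
  and R: "\<And>x. x \<in> carrier_vec k \<Longrightarrow> P *\<^sub>v x \<in> mat_range A"
  shows "\<exists>Y. Y \<in> carrier_mat m k \<and> P = A * Y"
proof -
  have "\<forall>j. \<exists>c. j < k \<longrightarrow> c \<in> carrier_vec m \<and> P *\<^sub>v unit_vec k j = A *\<^sub>v c"
  proof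
    fix j show "\<exists>c. j < k \<longrightarrow> c \<in> carrier_vec m \<and> P *\<^sub>v unit_vec k j = A *\<^sub>v c"
    proof (cases "j < k")
      case True
      from R[of "unit_vec k j"] obtain c where "c \<in> carrier_vec (dim_col A)" "P *\<^sub>v unit_vec k j = A *\<^sub>v c"
        unfolding mat_range_def by auto
      thus ?thesis using A by auto
    qed auto
  qed
  then obtain f where f: "\<And>j. j < k \<Longrightarrow> f j \<in> carrier_vec m \<and> P *\<^sub>v unit_vec k j = A *\<^sub>v f j"
    by metis
  define Y where "Y = mat m k (\<lambda>(i, j). f j $ i)"
  have Y: "Y \<in> carrier_mat m k" unfolding Y_def by simp
  have "P = A * Y"
  proof (rule eq_matI)
    fix i j assume "i < dim_row (A * Y)" "j < dim_col (A * Y)"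
    hence ij: "i < n" "j < k" using A Y by auto
    have cY: "col Y j = f j" using f[OF ij(2)] ij unfolding Y_def by (intro eq_vecI) auto
    have "P $$ (i, j) = col P j $ i" using P ij by simp
    also have "col P j = A *\<^sub>v f j" using f[OF ij(2)] mv_unit[OF P ij(2)] by simp
    also have "(A *\<^sub>v f j) $ i = (A *\<^sub>v col Y j) $ i" using cY by simp
    also have "\<dots> = (A * Y) $$ (i, j)" using A Y ij by (simp add: row_def col_def)
    finally show "P $$ (i, j) = (A * Y) $$ (i, j)" .
  qed (use A Y P in auto)
  thus ?thesis using Y by blast
qed

lemma supp_proj_factor: assumes A: "A \<in> carrier_mat n n" and h: "cadj A = A"
  shows "\<exists>Y. Y \<in> carrier_mat n n \<and> supp_proj A = cadj Y * A"
proof -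
  note Pf = supp_proj_fix[OF A]
  have "\<exists>Y. Y \<in> carrier_mat n n \<and> supp_proj A = A * Y"
  proof (rule range_factor[OF A Pf(1)])
    fix x :: "complex vec" assume x: "x \<in> carrier_vec n"
    have "supp_proj A *\<^sub>v x \<in> fixset n (supp_proj A)" unfolding fixset_def using x Pf
      by (simp flip: assoc_mult_mat_vec)
    thus "supp_proj A *\<^sub>v x \<in> mat_range A" using Pf(4) by simp
  qed
  then obtain Y where Y: "Y \<in> carrier_mat n n" "supp_proj A = A * Y" by blast
  have "supp_proj A = cadj (A * Y)" using Pf(3) Y(2) by simp
  also have "\<dots> = cadj Y * A" using cadj_mult[OF A Y(1)] h by simp
  finally show ?thesis using Y by blast
qed

definition vkron :: "complex vec \<Rightarrow> complex vec \<Rightarrow> complex vec" where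
  "vkron v w = vec (dim_vec v * dim_vec w) (\<lambda>i. v $ (i div dim_vec w) * w $ (i mod dim_vec w))"

lemma vkron_dim[simp]: "dim_vec (vkron v w) = dim_vec v * dim_vec w" by (simp add: vkron_def)

lemma vkron_carrier[simp]: "v \<in> carrier_vec a \<Longrightarrow> w \<in> carrier_vec b \<Longrightarrow> vkron v w \<in> carrier_vec (a * b)"
  unfolding carrier_vec_def by simp

lemma vkron_idx: "v \<in> carrier_vec a \<Longrightarrow> w \<in> carrier_vec b \<Longrightarrow> i < a * b \<Longrightarrow>
  vkron v w $ i = v $ (i div b) * w $ (i mod b)"
  unfolding vkron_def carrier_vec_def by simp

lemma kron_mv_vkron: assumes A: "A \<in> carrier_mat na ma" and B: "B \<in> carrier_mat nb mb"
  and v: "v \<in> carrier_vec ma" and w: "w \<in> carrier_vec mb"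
  shows "kron A B *\<^sub>v vkron v w = vkron (A *\<^sub>v v) (B *\<^sub>v w)"
proof (rule vec_eqI_carrier[of _ "na * nb"])
  show "kron A B *\<^sub>v vkron v w \<in> carrier_vec (na * nb)" using kron_carrier[OF A B] vkron_carrier[OF v w]
    by (rule mult_mat_vec_carrier)
  show "vkron (A *\<^sub>v v) (B *\<^sub>v w) \<in> carrier_vec (na * nb)" using A B v w by simp
  fix i assume i: "i < na * nb"
  have i1: "i div nb < na" "i mod nb < nb" using i div_lt_aux mod_lt_aux by auto
  have "(kron A B *\<^sub>v vkron v w) $ i = (\<Sum>t<ma * mb. kron A B $$ (i, t) * vkron v w $ t)"
    using A B v w i by (intro mv_idx) auto
  also have "\<dots> = (\<Sum>p<ma. \<Sum>q<mb. kron A B $$ (i, p * mb + q) * vkron v w $ (p * mb + q))"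
    by (rule sum_prod_split)
  also have "\<dots> = (\<Sum>p<ma. \<Sum>q<mb. (A $$ (i div nb, p) * v $ p) * (B $$ (i mod nb, q) * w $ q))"
  proof (intro sum.cong refl)
    fix p q assume p: "p \<in> {..<ma}" and q: "q \<in> {..<mb}"
    have t: "p * mb + q < ma * mb" using lt_mult_aux p q by auto
    have "kron A B $$ (i, p * mb + q) = A $$ (i div nb, p) * B $$ (i mod nb, q)"
      using kron_idx[OF A B i t] div_mod_aux q by simp
    moreover have "vkron v w $ (p * mb + q) = v $ p * w $ q" using vkron_idx[OF v w t] div_mod_aux q by simp
    ultimately show "kron A B $$ (i, p * mb + q) * vkron v w $ (p * mb + q) = (A $$ (i div nb, p) * v $ p) * (B $$ (i mod nb, q) * w $ q)"
      by (simp add: mult_ac)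
  qed
  also have "\<dots> = (\<Sum>p<ma. A $$ (i div nb, p) * v $ p) * (\<Sum>q<mb. B $$ (i mod nb, q) * w $ q)"
    by (simp add: sum_product)
  also have "\<dots> = (A *\<^sub>v v) $ (i div nb) * (B *\<^sub>v w) $ (i mod nb)"
    by (simp only: mv_idx[OF A v i1(1)] mv_idx[OF B w i1(2)])
  also have "\<dots> = vkron (A *\<^sub>v v) (B *\<^sub>v w) $ i" using A B v w i by (subst vkron_idx[of _ na _ nb]) auto
  finally show "(kron A B *\<^sub>v vkron v w) $ i = vkron (A *\<^sub>v v) (B *\<^sub>v w) $ i" .
qed

lemma cinner_vkron: assumes "v \<in> carrier_vec a" "v' \<in> carrier_vec a" "w \<in> carrier_vec b" "w' \<in> carrier_vec b"
  shows "cinner (vkron v w) (vkron v' w') = cinner v v' * cinner w w'"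
proof -
  have "cinner (vkron v w) (vkron v' w') = (\<Sum>t<a * b. cnj (vkron v w $ t) * vkron v' w' $ t)"
    using assms by (simp add: cinner_def)
  also have "\<dots> = (\<Sum>p<a. \<Sum>q<b. cnj (vkron v w $ (p * b + q)) * vkron v' w' $ (p * b + q))"
    by (rule sum_prod_split)
  also have "\<dots> = (\<Sum>p<a. \<Sum>q<b. (cnj (v $ p) * v' $ p) * (cnj (w $ q) * w' $ q))"
  proof (intro sum.cong refl)
    fix p q assume p: "p \<in> {..<a}" and q: "q \<in> {..<b}"
    have t: "p * b + q < a * b" using lt_mult_aux p q by auto
    have "vkron v w $ (p * b + q) = v $ p * w $ q" using vkron_idx[OF assms(1,3) t] div_mod_aux q by simp
    moreover have "vkron v' w' $ (p * b + q) = v' $ p * w' $ q" using vkron_idx[OF assms(2,4) t] div_mod_aux q by simp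
    ultimately show "cnj (vkron v w $ (p * b + q)) * vkron v' w' $ (p * b + q) = (cnj (v $ p) * v' $ p) * (cnj (w $ q) * w' $ q)"
      by (simp add: mult_ac)
  qed
  also have "\<dots> = cinner v v' * cinner w w'" using assms by (simp add: cinner_def sum_product)
  finally show ?thesis .
qed

definition slice :: "nat \<Rightarrow> nat \<Rightarrow> complex vec \<Rightarrow> complex vec" where
  "slice D a w = vec D (\<lambda>q. w $ (a * D + q))"

lemma slice_carrier[simp]: "slice D a w \<in> carrier_vec D" by (simp add: slice_def)

lemma slice_kron_I: assumes X: "X \<in> carrier_mat D D" and w: "w \<in> carrier_vec (d * D)" and a: "a < d"
  shows "slice D a (kron (1\<^sub>m d) X *\<^sub>v w) = X *\<^sub>v slice D a w"
proof (rule vec_eqI_carrier[of _ D])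
  show "X *\<^sub>v slice D a w \<in> carrier_vec D" using X by simp
  fix q assume q: "q < D"
  have aq: "a * D + q < d * D" using lt_mult_aux[OF a q] .
  have K: "kron (1\<^sub>m d) X \<in> carrier_mat (d * D) (d * D)" using X by auto
  have "slice D a (kron (1\<^sub>m d) X *\<^sub>v w) $ q = (kron (1\<^sub>m d) X *\<^sub>v w) $ (a * D + q)"
    using q by (simp add: slice_def)
  also have "\<dots> = (\<Sum>t<d * D. kron (1\<^sub>m d) X $$ (a * D + q, t) * w $ t)"
    using K w aq by (intro mv_idx) auto
  also have "\<dots> = (\<Sum>p<d. \<Sum>q'<D. kron (1\<^sub>m d) X $$ (a * D + q, p * D + q') * w $ (p * D + q'))"
    by (rule sum_prod_split)
  also have "\<dots> = (\<Sum>p<d. if p = a then (\<Sum>q'<D. X $$ (q, q') * w $ (a * D + q')) else 0)"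
  proof (intro sum.cong refl)
    fix p assume p: "p \<in> {..<d}"
    show "(\<Sum>q'<D. kron (1\<^sub>m d) X $$ (a * D + q, p * D + q') * w $ (p * D + q')) =
      (if p = a then (\<Sum>q'<D. X $$ (q, q') * w $ (a * D + q')) else 0)"
    proof (cases "p = a")
      case True
      have "(\<Sum>q'<D. kron (1\<^sub>m d) X $$ (a * D + q, a * D + q') * w $ (a * D + q')) = (\<Sum>q'<D. X $$ (q, q') * w $ (a * D + q'))"
      proof (intro sum.cong refl)
        fix q' assume q': "q' \<in> {..<D}"
        have t: "a * D + q' < d * D" using lt_mult_aux a q' by auto
        show "kron (1\<^sub>m d) X $$ (a * D + q, a * D + q') * w $ (a * D + q') = X $$ (q, q') * w $ (a * D + q')"
          using kron_idx[OF one_carrier_mat X aq t] div_mod_aux q q' a by simp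
      qed
      thus ?thesis using True by simp
    next
      case False
      have "kron (1\<^sub>m d) X $$ (a * D + q, p * D + q') = 0" if q': "q' < D" for q'
      proof -
        have t: "p * D + q' < d * D" using lt_mult_aux p q' by auto
        show ?thesis using kron_idx[OF one_carrier_mat X aq t] div_mod_aux q q' a p False by simp
      qed
      thus ?thesis using False by simp
    qed
  qed
  also have "\<dots> = (\<Sum>q'<D. X $$ (q, q') * w $ (a * D + q'))" using a by simp
  also have "\<dots> = (X *\<^sub>v slice D a w) $ q" using X q by (subst mv_idx[of _ D D]) (auto simp: slice_def)
  finally show "slice D a (kron (1\<^sub>m d) X *\<^sub>v w) $ q = (X *\<^sub>v slice D a w) $ q" .
qed simp

lemma slice_eq: assumes v: "v \<in> carrier_vec (d * D)" and w: "w \<in> carrier_vec (d * D)"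
  and eq: "\<And>a. a < d \<Longrightarrow> slice D a v = slice D a w" shows "v = w"
proof (rule vec_eqI_carrier[OF v w])
  fix i assume i: "i < d * D"
  have a: "i div D < d" and q: "i mod D < D" using i div_lt_aux mod_lt_aux by auto
  have "v $ i = slice D (i div D) v $ (i mod D)" using q by (simp add: slice_def mult.commute)
  also have "\<dots> = slice D (i div D) w $ (i mod D)" using eq[OF a] by simp
  also have "\<dots> = w $ i" using q by (simp add: slice_def mult.commute)
  finally show "v $ i = w $ i" .
qed

section \<open>Linear combinations of Hermitian forms\<close>

lemma lin_carrier: "R0 \<in> carrier_mat D D \<Longrightarrow> R \<in> carrier_mat D D \<Longrightarrow>
  complex_of_real q \<cdot>\<^sub>m R0 - complex_of_real h \<cdot>\<^sub>m R \<in> carrier_mat D D"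
  by (intro minus_carrier_mat) auto

lemma lin_herm: "R0 \<in> carrier_mat D D \<Longrightarrow> R \<in> carrier_mat D D \<Longrightarrow> cadj R0 = R0 \<Longrightarrow> cadj R = R \<Longrightarrow>
  cadj (complex_of_real q \<cdot>\<^sub>m R0 - complex_of_real h \<cdot>\<^sub>m R) = complex_of_real q \<cdot>\<^sub>m R0 - complex_of_real h \<cdot>\<^sub>m R"
  by (subst cadj_minus[of _ D D]) (auto simp: cadj_smult)

lemma lin_form: assumes "R0 \<in> carrier_mat D D" "R \<in> carrier_mat D D" "v \<in> carrier_vec D"
  shows "Re (cinner v ((complex_of_real q \<cdot>\<^sub>m R0 - complex_of_real h \<cdot>\<^sub>m R) *\<^sub>v v)) =
    q * Re (cinner v (R0 *\<^sub>v v)) - h * Re (cinner v (R *\<^sub>v v))"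
proof -
  have "(complex_of_real q \<cdot>\<^sub>m R0 - complex_of_real h \<cdot>\<^sub>m R) *\<^sub>v v =
     (complex_of_real q \<cdot>\<^sub>m R0) *\<^sub>v v - (complex_of_real h \<cdot>\<^sub>m R) *\<^sub>v v"
    using assms by (intro minus_mult_distrib_mat_vec) auto
  also have "\<dots> = complex_of_real q \<cdot>\<^sub>v (R0 *\<^sub>v v) - complex_of_real h \<cdot>\<^sub>v (R *\<^sub>v v)"
    using assms by (simp add: smult_mat_mv)
  finally have e: "(complex_of_real q \<cdot>\<^sub>m R0 - complex_of_real h \<cdot>\<^sub>m R) *\<^sub>v v = complex_of_real q \<cdot>\<^sub>v (R0 *\<^sub>v v) - complex_of_real h \<cdot>\<^sub>v (R *\<^sub>v v)" .
  show ?thesis unfolding e using assms by (simp add: cinner_minus_right cinner_smult_right)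
qed

lemma lin_psd_iff: assumes R0: "R0 \<in> carrier_mat D D" "cadj R0 = R0" and R: "R \<in> carrier_mat D D" "cadj R = R"
  shows "psd D (complex_of_real q \<cdot>\<^sub>m R0 - complex_of_real h \<cdot>\<^sub>m R) \<longleftrightarrow>
    (\<forall>v \<in> carrier_vec D. 0 \<le> q * Re (cinner v (R0 *\<^sub>v v)) - h * Re (cinner v (R *\<^sub>v v)))"
  using lin_carrier[OF R0(1) R(1)] lin_herm[OF R0(1) R(1) R0(2) R(2)] lin_form[OF R0(1) R(1)]
  unfolding psd_def by auto

lemma inf_attained: assumes R0: "psd D R0" and R: "R \<in> carrier_mat D D" "cadj R = R"
  and ne: "q0 \<in> {q. psd D (complex_of_real q \<cdot>\<^sub>m R0 - complex_of_real h \<cdot>\<^sub>m R)}"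
  and bdd: "bdd_below {q. psd D (complex_of_real q \<cdot>\<^sub>m R0 - complex_of_real h \<cdot>\<^sub>m R)}"
  shows "Inf {q. psd D (complex_of_real q \<cdot>\<^sub>m R0 - complex_of_real h \<cdot>\<^sub>m R)}
    \<in> {q. psd D (complex_of_real q \<cdot>\<^sub>m R0 - complex_of_real h \<cdot>\<^sub>m R)}"
proof -
  define S where "S = {q. psd D (complex_of_real q \<cdot>\<^sub>m R0 - complex_of_real h \<cdot>\<^sub>m R)}"
  have R0c: "R0 \<in> carrier_mat D D" "cadj R0 = R0" using R0 by (auto simp: psd_def)
  note iff = lin_psd_iff[OF R0c R]
  have Sne: "S \<noteq> {}" using ne unfolding S_def by blast
  have bdd': "bdd_below S" using bdd unfolding S_def .
  have "0 \<le> Inf S * Re (cinner v (R0 *\<^sub>v v)) - h * Re (cinner v (R *\<^sub>v v))" if v: "v \<in> carrier_vec D" for v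
  proof -
    define a where "a = Re (cinner v (R0 *\<^sub>v v))"
    define b where "b = Re (cinner v (R *\<^sub>v v))"
    have a0: "0 \<le> a" unfolding a_def using psd_form[OF R0 v] .
    have Sq: "0 \<le> q * a - h * b" if "q \<in> S" for q using that v iff unfolding S_def a_def b_def by auto
    show ?thesis
    proof (cases "a = 0")
      case True
      thus ?thesis using Sq[OF ne[folded S_def]] unfolding a_def[symmetric] b_def[symmetric] by simp
    next
      case False
      hence apos: "0 < a" using a0 by simp
      have "h * b / a \<le> Inf S"
      proof (rule cInf_greatest[OF Sne])
        fix q assume "q \<in> S"
        hence "h * b \<le> q * a" using Sq by fastforce
        thus "h * b / a \<le> q" using apos by (simp add: divide_le_eq mult.commute)
      qed
      thus ?thesis using apos unfolding a_def[symmetric] b_def[symmetric] by (simp add: divide_le_eq mult.commute)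
    qed
  qed
  thus ?thesis using iff unfolding S_def[symmetric] by (simp add: S_def)
qed

lemma not_in_S: assumes R0: "R0 \<in> carrier_mat D D" "cadj R0 = R0" and R: "R \<in> carrier_mat D D" "cadj R = R"
  and nS: "\<not> psd D (complex_of_real q \<cdot>\<^sub>m R0 - complex_of_real h \<cdot>\<^sub>m R)"
  shows "\<exists>v \<in> carrier_vec D. q * Re (cinner v (R0 *\<^sub>v v)) < h * Re (cinner v (R *\<^sub>v v))"
  using nS lin_psd_iff[OF R0 R] by force

lemma ctrace_lin: assumes "A \<in> carrier_mat D D" "B \<in> carrier_mat D D"
  shows "ctrace (a \<cdot>\<^sub>m A - b \<cdot>\<^sub>m B) = a * ctrace A - b * ctrace B"
  using assms by (simp add: ctrace_def sum_subtractf sum_distrib_left)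

lemma psd_trace: assumes "psd D A" shows "0 \<le> Re (ctrace A)"
proof -
  have "dim_row A = D" using psd_carrier[OF assms] by simp
  hence "Re (ctrace A) = (\<Sum>i<D. Re (A $$ (i, i)))" by (simp add: ctrace_def)
  also have "\<dots> \<ge> 0" using psd_diag(2)[OF assms] by (intro sum_nonneg) auto
  finally show ?thesis .
qed

lemma psd_wsum: assumes "finite I" "\<And>i. i \<in> I \<Longrightarrow> 0 \<le> c i" "\<And>i. i \<in> I \<Longrightarrow> psd D (r i)"
  shows "psd D (mat D D (\<lambda>(a, b). \<Sum>i\<in>I. complex_of_real (c i) * r i $$ (a, b)))"
  using assms
proof (induction I rule: finite_induct)
  case empty
  have e: "mat D D (\<lambda>(a, b). \<Sum>i\<in>{}. complex_of_real (c i) * r i $$ (a, b)) = 0\<^sub>m D D"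
    by (intro eq_matI) auto
  show ?case unfolding e by (rule psd_zero)
next
  case (insert j I)
  have rj: "r j \<in> carrier_mat D D" using insert.prems(2) by (auto simp: psd_def)
  have eq: "mat D D (\<lambda>(a, b). \<Sum>i\<in>insert j I. complex_of_real (c i) * r i $$ (a, b)) =
    complex_of_real (c j) \<cdot>\<^sub>m r j + mat D D (\<lambda>(a, b). \<Sum>i\<in>I. complex_of_real (c i) * r i $$ (a, b))"
    using insert.hyps rj by (intro eq_matI) auto
  have p1: "psd D (complex_of_real (c j) \<cdot>\<^sub>m r j)" using insert.prems by (intro psd_smult) auto
  have p2: "psd D (mat D D (\<lambda>(a, b). \<Sum>i\<in>I. complex_of_real (c i) * r i $$ (a, b)))"
    by (rule insert.IH) (use insert.prems in auto)
  have "psd D (mat D D (\<lambda>(a, b). \<Sum>i\<in>insert j I. complex_of_real (c i) * r i $$ (a, b)))"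
    by (subst eq) (rule psd_add[OF p1 p2])
  thus ?case .
qed

section \<open>A single ensemble\<close>

lemma ens_rho: "ensemble d n \<eta> \<rho> \<Longrightarrow> i < n \<Longrightarrow> psd d (\<rho> i) \<and> ctrace (\<rho> i) = 1 \<and> 0 < \<eta> i"
  by (auto simp: ensemble_def density_op_def)

lemma avg_psd: assumes "ensemble d n \<eta> \<rho>" shows "psd d (avg_state d n \<eta> \<rho>)"
  unfolding avg_state_def using ens_rho[OF assms] less_imp_le by (intro psd_wsum) blast+

lemma avg_minus_psd: assumes E: "ensemble d n \<eta> \<rho>" and x: "x < n"
  shows "psd d (avg_state d n \<eta> \<rho> - complex_of_real (\<eta> x) \<cdot>\<^sub>m \<rho> x)"
proof -
  have rx: "\<rho> x \<in> carrier_mat d d" using ens_rho[OF E x] by (simp add: psd_def)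
  have "avg_state d n \<eta> \<rho> - complex_of_real (\<eta> x) \<cdot>\<^sub>m \<rho> x =
    mat d d (\<lambda>(a, b). \<Sum>i\<in>{..<n} - {x}. complex_of_real (\<eta> i) * \<rho> i $$ (a, b))"
  proof (rule eq_matI)
    fix a b assume "a < dim_row (mat d d (\<lambda>(a, b). \<Sum>i\<in>{..<n} - {x}. complex_of_real (\<eta> i) * \<rho> i $$ (a, b)))"
      "b < dim_col (mat d d (\<lambda>(a, b). \<Sum>i\<in>{..<n} - {x}. complex_of_real (\<eta> i) * \<rho> i $$ (a, b)))"
    hence ab: "a < d" "b < d" by auto
    have "(\<Sum>i<n. complex_of_real (\<eta> i) * \<rho> i $$ (a, b)) =
      complex_of_real (\<eta> x) * \<rho> x $$ (a, b) + (\<Sum>i\<in>{..<n} - {x}. complex_of_real (\<eta> i) * \<rho> i $$ (a, b))"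
      using x by (subst sum.remove[of _ x]) auto
    thus "(avg_state d n \<eta> \<rho> - complex_of_real (\<eta> x) \<cdot>\<^sub>m \<rho> x) $$ (a, b) =
      mat d d (\<lambda>(a, b). \<Sum>i\<in>{..<n} - {x}. complex_of_real (\<eta> i) * \<rho> i $$ (a, b)) $$ (a, b)"
      using ab rx by (simp add: avg_state_def)
  qed (use rx in \<open>auto simp: avg_state_def\<close>)
  also have "psd d \<dots>" using ens_rho[OF E] less_imp_le by (intro psd_wsum) blast+
  finally show ?thesis .
qed

lemma avg_trace: assumes E: "ensemble d n \<eta> \<rho>" shows "ctrace (avg_state d n \<eta> \<rho>) = 1"
proof -
  have "ctrace (avg_state d n \<eta> \<rho>) = (\<Sum>a<d. \<Sum>i<n. complex_of_real (\<eta> i) * \<rho> i $$ (a, a))"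
    by (simp add: ctrace_def avg_state_def)
  also have "\<dots> = (\<Sum>i<n. complex_of_real (\<eta> i) * (\<Sum>a<d. \<rho> i $$ (a, a)))"
    by (subst sum.swap) (simp add: sum_distrib_left)
  also have "\<dots> = (\<Sum>i<n. complex_of_real (\<eta> i))"
  proof (rule sum.cong[OF refl])
    fix i assume "i \<in> {..<n}"
    hence "psd d (\<rho> i)" "ctrace (\<rho> i) = 1" using ens_rho[OF E] by auto
    moreover have "dim_row (\<rho> i) = d" using psd_carrier[OF \<open>psd d (\<rho> i)\<close>] by simp
    ultimately have "(\<Sum>a<d. \<rho> i $$ (a, a)) = 1" by (simp add: ctrace_def)
    thus "complex_of_real (\<eta> i) * (\<Sum>a<d. \<rho> i $$ (a, a)) = complex_of_real (\<eta> i)" by simp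
  qed
  also have "\<dots> = 1" using E unfolding ensemble_def by (metis of_real_1 of_real_sum)
  finally show ?thesis .
qed

lemma comp_facts: assumes E: "ensemble d n \<eta> \<rho>" and x: "x < n"
  defines "c \<equiv> max_conf d (\<eta> x) (\<rho> x) (avg_state d n \<eta> \<rho>)"
  shows "psd d (complex_of_real c \<cdot>\<^sub>m avg_state d n \<eta> \<rho> - complex_of_real (\<eta> x) \<cdot>\<^sub>m \<rho> x)"
    "0 < c"
    "\<And>q. q < c \<Longrightarrow> \<exists>v \<in> carrier_vec d. 0 < Re (cinner v (avg_state d n \<eta> \<rho> *\<^sub>v v)) \<and>
        q * Re (cinner v (avg_state d n \<eta> \<rho> *\<^sub>v v)) < \<eta> x * Re (cinner v (\<rho> x *\<^sub>v v))"
proof -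
  define R0 where "R0 = avg_state d n \<eta> \<rho>"
  define S where "S = {q. psd d (complex_of_real q \<cdot>\<^sub>m R0 - complex_of_real (\<eta> x) \<cdot>\<^sub>m \<rho> x)}"
  have R0: "psd d R0" unfolding R0_def using avg_psd[OF E] .
  have R0c: "R0 \<in> carrier_mat d d" "cadj R0 = R0" using R0 by (auto simp: psd_def)
  have rx: "psd d (\<rho> x)" "ctrace (\<rho> x) = 1" "0 < \<eta> x" using ens_rho[OF E x] by auto
  have rxc: "\<rho> x \<in> carrier_mat d d" "cadj (\<rho> x) = \<rho> x" using rx by (auto simp: psd_def)
  have c_def': "c = Inf S" unfolding c_def S_def R0_def max_conf_def ..
  have "complex_of_real 1 \<cdot>\<^sub>m R0 = R0" using R0c by (intro eq_matI) auto
  hence one: "1 \<in> S" unfolding S_def using avg_minus_psd[OF E x] by (simp add: R0_def)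
  have low: "\<eta> x \<le> q" if "q \<in> S" for q
  proof -
    have "0 \<le> Re (ctrace (complex_of_real q \<cdot>\<^sub>m R0 - complex_of_real (\<eta> x) \<cdot>\<^sub>m \<rho> x))"
      using that psd_trace unfolding S_def by auto
    also have "ctrace (complex_of_real q \<cdot>\<^sub>m R0 - complex_of_real (\<eta> x) \<cdot>\<^sub>m \<rho> x) = complex_of_real q - complex_of_real (\<eta> x)"
      using ctrace_lin[OF R0c(1) rxc(1)] avg_trace[OF E] rx(2) unfolding R0_def by simp
    finally show ?thesis by simp
  qed
  have bdd: "bdd_below S" using low by (intro bdd_belowI) auto
  have cS: "c \<in> S" unfolding c_def' S_def using inf_attained[OF R0 rxc, of 1 "\<eta> x"] one bdd unfolding S_def by simp
  thus "psd d (complex_of_real c \<cdot>\<^sub>m avg_state d n \<eta> \<rho> - complex_of_real (\<eta> x) \<cdot>\<^sub>m \<rho> x)" unfolding S_def R0_def by simp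
  show "0 < c" using low[OF cS] rx(3) by simp
  fix q assume q: "q < c"
  have "q \<notin> S"
  proof
    assume "q \<in> S"
    hence "c \<le> q" unfolding c_def' using bdd by (intro cInf_lower)
    thus False using q by simp
  qed
  then obtain v where v: "v \<in> carrier_vec d" "q * Re (cinner v (R0 *\<^sub>v v)) < \<eta> x * Re (cinner v (\<rho> x *\<^sub>v v))"
    using not_in_S[OF R0c rxc] unfolding S_def by blast
  have a0: "0 \<le> Re (cinner v (R0 *\<^sub>v v))" using psd_form[OF R0 v(1)] .
  have "0 \<le> 1 * Re (cinner v (R0 *\<^sub>v v)) - \<eta> x * Re (cinner v (\<rho> x *\<^sub>v v))"
    using one lin_psd_iff[OF R0c rxc] v(1) unfolding S_def by blast
  hence "0 < Re (cinner v (R0 *\<^sub>v v))" using v(2) a0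
    by (cases "Re (cinner v (R0 *\<^sub>v v)) = 0") auto
  thus "\<exists>v \<in> carrier_vec d. 0 < Re (cinner v (avg_state d n \<eta> \<rho> *\<^sub>v v)) \<and>
        q * Re (cinner v (avg_state d n \<eta> \<rho> *\<^sub>v v)) < \<eta> x * Re (cinner v (\<rho> x *\<^sub>v v))"
    using v unfolding R0_def by blast
qed

definition Tl :: "nat list \<Rightarrow> (nat \<Rightarrow> complex mat) \<Rightarrow> complex mat" where
  "Tl ls f = foldr (\<lambda>l M. kron (f l) M) ls (1\<^sub>m 1)"

definition Dm :: "nat list \<Rightarrow> (nat \<Rightarrow> nat) \<Rightarrow> nat" where
  "Dm ls d = prod_list (map d ls)"

lemma Tl_Nil[simp]: "Tl [] f = 1\<^sub>m 1" by (simp add: Tl_def)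
lemma Tl_Cons[simp]: "Tl (l # ls) f = kron (f l) (Tl ls f)" by (simp add: Tl_def)
lemma Dm_Nil[simp]: "Dm [] d = 1" by (simp add: Dm_def)
lemma Dm_Cons[simp]: "Dm (l # ls) d = d l * Dm ls d" by (simp add: Dm_def)

lemma Tl_carrier: "(\<And>l. l \<in> set ls \<Longrightarrow> f l \<in> carrier_mat (d l) (d l)) \<Longrightarrow> Tl ls f \<in> carrier_mat (Dm ls d) (Dm ls d)"
  by (induction ls) auto

lemma one_psd: "psd n (1\<^sub>m n)"
proof (rule psdI)
  fix v :: "complex vec" assume "v \<in> carrier_vec n"
  thus "0 \<le> Re (cinner v (1\<^sub>m n *\<^sub>v v))" using cinner_self_ge0[of v] by simp
qed auto

lemma Tl_psd: "(\<And>l. l \<in> set ls \<Longrightarrow> psd (d l) (f l)) \<Longrightarrow> psd (Dm ls d) (Tl ls f)"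
  by (induction ls) (auto simp: one_psd kron_psd)

lemma Tl_herm: "(\<And>l. l \<in> set ls \<Longrightarrow> f l \<in> carrier_mat (d l) (d l) \<and> cadj (f l) = f l) \<Longrightarrow> cadj (Tl ls f) = Tl ls f"
proof (induction ls)
  case (Cons l ls)
  have "f l \<in> carrier_mat (d l) (d l)" "cadj (f l) = f l" using Cons.prems by auto
  moreover have "Tl ls f \<in> carrier_mat (Dm ls d) (Dm ls d)" using Cons.prems by (intro Tl_carrier) auto
  moreover have "cadj (Tl ls f) = Tl ls f" using Cons by auto
  ultimately show ?case by (simp add: cadj_kron)
qed simp

definition good :: "(nat \<Rightarrow> nat) \<Rightarrow> (nat \<Rightarrow> complex mat) \<Rightarrow> (nat \<Rightarrow> complex mat) \<Rightarrow> (nat \<Rightarrow> real) \<Rightarrow> (nat \<Rightarrow> real) \<Rightarrow> nat \<Rightarrow> bool" where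
  "good d R0f Rxf cf hf l \<longleftrightarrow> psd (d l) (R0f l) \<and> psd (d l) (Rxf l) \<and> 0 < hf l \<and> 0 < cf l \<and>
     psd (d l) (complex_of_real (cf l) \<cdot>\<^sub>m R0f l - complex_of_real (hf l) \<cdot>\<^sub>m Rxf l) \<and>
     (\<forall>q < cf l. \<exists>v \<in> carrier_vec (d l). 0 < Re (cinner v (R0f l *\<^sub>v v)) \<and>
        q * Re (cinner v (R0f l *\<^sub>v v)) < hf l * Re (cinner v (Rxf l *\<^sub>v v)))"

lemma kron_decomp1: assumes "A0 \<in> carrier_mat d d" "A1 \<in> carrier_mat d d" "B0 \<in> carrier_mat D D" "B1 \<in> carrier_mat D D"
  shows "complex_of_real (c * c') \<cdot>\<^sub>m kron A0 B0 - complex_of_real (h * h') \<cdot>\<^sub>m kron A1 B1 =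
    complex_of_real c' \<cdot>\<^sub>m kron (complex_of_real c \<cdot>\<^sub>m A0 - complex_of_real h \<cdot>\<^sub>m A1) B0 +
    complex_of_real h \<cdot>\<^sub>m kron A1 (complex_of_real c' \<cdot>\<^sub>m B0 - complex_of_real h' \<cdot>\<^sub>m B1)"
proof (rule eq_matI)
  fix i j assume ij: "i < dim_row (complex_of_real c' \<cdot>\<^sub>m kron (complex_of_real c \<cdot>\<^sub>m A0 - complex_of_real h \<cdot>\<^sub>m A1) B0 +
    complex_of_real h \<cdot>\<^sub>m kron A1 (complex_of_real c' \<cdot>\<^sub>m B0 - complex_of_real h' \<cdot>\<^sub>m B1))"
    "j < dim_col (complex_of_real c' \<cdot>\<^sub>m kron (complex_of_real c \<cdot>\<^sub>m A0 - complex_of_real h \<cdot>\<^sub>m A1) B0 +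
    complex_of_real h \<cdot>\<^sub>m kron A1 (complex_of_real c' \<cdot>\<^sub>m B0 - complex_of_real h' \<cdot>\<^sub>m B1))"
  hence ij': "i < d * D" "j < d * D" using assms by auto
  have i1: "i div D < d" "i mod D < D" "j div D < d" "j mod D < D" using ij' div_lt_aux mod_lt_aux by auto
  show "(complex_of_real (c * c') \<cdot>\<^sub>m kron A0 B0 - complex_of_real (h * h') \<cdot>\<^sub>m kron A1 B1) $$ (i, j) =
    (complex_of_real c' \<cdot>\<^sub>m kron (complex_of_real c \<cdot>\<^sub>m A0 - complex_of_real h \<cdot>\<^sub>m A1) B0 +
    complex_of_real h \<cdot>\<^sub>m kron A1 (complex_of_real c' \<cdot>\<^sub>m B0 - complex_of_real h' \<cdot>\<^sub>m B1)) $$ (i, j)"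
    using assms ij' i1 by (simp add: kron_def algebra_simps)
qed (use assms in auto)

lemma kron_decomp2: assumes "A0 \<in> carrier_mat d d" "A1 \<in> carrier_mat d d" "B0 \<in> carrier_mat D D" "B1 \<in> carrier_mat D D"
  shows "complex_of_real (c * c') \<cdot>\<^sub>m kron A0 B0 - complex_of_real (h * h') \<cdot>\<^sub>m kron A1 B1 =
    complex_of_real c \<cdot>\<^sub>m kron A0 (complex_of_real c' \<cdot>\<^sub>m B0 - complex_of_real h' \<cdot>\<^sub>m B1) +
    kron (complex_of_real c \<cdot>\<^sub>m A0 - complex_of_real h \<cdot>\<^sub>m A1) (complex_of_real h' \<cdot>\<^sub>m B1)"
proof (rule eq_matI)
  fix i j assume ij: "i < dim_row (complex_of_real c \<cdot>\<^sub>m kron A0 (complex_of_real c' \<cdot>\<^sub>m B0 - complex_of_real h' \<cdot>\<^sub>m B1) +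
    kron (complex_of_real c \<cdot>\<^sub>m A0 - complex_of_real h \<cdot>\<^sub>m A1) (complex_of_real h' \<cdot>\<^sub>m B1))"
    "j < dim_col (complex_of_real c \<cdot>\<^sub>m kron A0 (complex_of_real c' \<cdot>\<^sub>m B0 - complex_of_real h' \<cdot>\<^sub>m B1) +
    kron (complex_of_real c \<cdot>\<^sub>m A0 - complex_of_real h \<cdot>\<^sub>m A1) (complex_of_real h' \<cdot>\<^sub>m B1))"
  hence ij': "i < d * D" "j < d * D" using assms by auto
  have i1: "i div D < d" "i mod D < D" "j div D < d" "j mod D < D" using ij' div_lt_aux mod_lt_aux by auto
  show "(complex_of_real (c * c') \<cdot>\<^sub>m kron A0 B0 - complex_of_real (h * h') \<cdot>\<^sub>m kron A1 B1) $$ (i, j) =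
    (complex_of_real c \<cdot>\<^sub>m kron A0 (complex_of_real c' \<cdot>\<^sub>m B0 - complex_of_real h' \<cdot>\<^sub>m B1) +
    kron (complex_of_real c \<cdot>\<^sub>m A0 - complex_of_real h \<cdot>\<^sub>m A1) (complex_of_real h' \<cdot>\<^sub>m B1)) $$ (i, j)"
    using assms ij' i1 by (simp add: kron_def algebra_simps)
qed (use assms in auto)

definition Kp :: "nat list \<Rightarrow> (nat \<Rightarrow> real) \<Rightarrow> real" where "Kp ls c = prod_list (map c ls)"
lemma Kp_Nil[simp]: "Kp [] c = 1" by (simp add: Kp_def)
lemma Kp_Cons[simp]: "Kp (l # ls) c = c l * Kp ls c" by (simp add: Kp_def)
lemma Kp_pos: "(\<And>l. l \<in> set ls \<Longrightarrow> 0 < c l) \<Longrightarrow> 0 < Kp ls c"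
  by (induction ls) auto

definition Mseq where
  "Mseq ls R0f Rxf cf hf = complex_of_real (Kp ls cf) \<cdot>\<^sub>m Tl ls R0f - complex_of_real (Kp ls hf) \<cdot>\<^sub>m Tl ls Rxf"

lemma good_carrier: "good d R0f Rxf cf hf l \<Longrightarrow> R0f l \<in> carrier_mat (d l) (d l) \<and> Rxf l \<in> carrier_mat (d l) (d l)"
  by (auto simp: good_def psd_def)

lemma Mseq_psd: "(\<And>l. l \<in> set ls \<Longrightarrow> good d R0f Rxf cf hf l) \<Longrightarrow> psd (Dm ls d) (Mseq ls R0f Rxf cf hf)"
proof (induction ls)
  case Nil
  have "Mseq [] R0f Rxf cf hf = 0\<^sub>m 1 1" unfolding Mseq_def by (intro eq_matI) auto
  thus ?case using psd_zero by simp
next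
  case (Cons l ls)
  have g: "good d R0f Rxf cf hf l" using Cons.prems by simp
  have c0: "R0f l \<in> carrier_mat (d l) (d l)" "Rxf l \<in> carrier_mat (d l) (d l)" using good_carrier[OF g] by auto
  have gc: "\<And>l'. l' \<in> set ls \<Longrightarrow> R0f l' \<in> carrier_mat (d l') (d l') \<and> Rxf l' \<in> carrier_mat (d l') (d l')"
    using Cons.prems good_carrier by (meson list.set_intros(2))
  have c1: "Tl ls R0f \<in> carrier_mat (Dm ls d) (Dm ls d)" "Tl ls Rxf \<in> carrier_mat (Dm ls d) (Dm ls d)"
    using Tl_carrier[of ls R0f d] Tl_carrier[of ls Rxf d] gc by blast+
  have e: "Mseq (l # ls) R0f Rxf cf hf =
    complex_of_real (Kp ls cf) \<cdot>\<^sub>m kron (complex_of_real (cf l) \<cdot>\<^sub>m R0f l - complex_of_real (hf l) \<cdot>\<^sub>m Rxf l) (Tl ls R0f) +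
    complex_of_real (hf l) \<cdot>\<^sub>m kron (Rxf l) (Mseq ls R0f Rxf cf hf)"
    unfolding Mseq_def using kron_decomp1[OF c0 c1] by simp
  have p0: "psd (Dm ls d) (Tl ls R0f)" using Cons.prems by (intro Tl_psd) (auto simp: good_def)
  have kp: "0 \<le> Kp ls cf" using Cons.prems by (intro less_imp_le Kp_pos) (auto simp: good_def)
  have "psd (d l * Dm ls d) (complex_of_real (Kp ls cf) \<cdot>\<^sub>m kron (complex_of_real (cf l) \<cdot>\<^sub>m R0f l - complex_of_real (hf l) \<cdot>\<^sub>m Rxf l) (Tl ls R0f))"
    using g p0 kp by (intro psd_smult kron_psd) (auto simp: good_def)
  moreover have "psd (d l * Dm ls d) (complex_of_real (hf l) \<cdot>\<^sub>m kron (Rxf l) (Mseq ls R0f Rxf cf hf))"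
  proof -
    have "0 \<le> hf l" "psd (d l) (Rxf l)" using g by (auto simp: good_def)
    moreover have "psd (Dm ls d) (Mseq ls R0f Rxf cf hf)" using Cons by auto
    ultimately show ?thesis by (intro psd_smult kron_psd) auto
  qed
  ultimately show ?case unfolding e by (simp add: psd_add)
qed

lemma herm_form_Re_mult: assumes "A \<in> carrier_mat n n" "cadj A = A" "v \<in> carrier_vec n"
  "B \<in> carrier_mat m m" "cadj B = B" "w \<in> carrier_vec m"
  shows "Re (cinner v (A *\<^sub>v v) * cinner w (B *\<^sub>v w)) = Re (cinner v (A *\<^sub>v v)) * Re (cinner w (B *\<^sub>v w))"
proof -
  have "cinner v (A *\<^sub>v v) * cinner w (B *\<^sub>v w) = complex_of_real (Re (cinner v (A *\<^sub>v v))) * complex_of_real (Re (cinner w (B *\<^sub>v w)))"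
    using herm_form_real[OF assms(1-3)] herm_form_real[OF assms(4-6)] by simp
  thus ?thesis by (metis Re_complex_of_real of_real_mult)
qed

lemma kron_form: assumes A: "A \<in> carrier_mat n n" "cadj A = A" and v: "v \<in> carrier_vec n"
  and B: "B \<in> carrier_mat m m" "cadj B = B" and w: "w \<in> carrier_vec m"
  shows "Re (cinner (vkron v w) (kron A B *\<^sub>v vkron v w)) = Re (cinner v (A *\<^sub>v v)) * Re (cinner w (B *\<^sub>v w))"
proof -
  have "cinner (vkron v w) (kron A B *\<^sub>v vkron v w) = cinner (vkron v w) (vkron (A *\<^sub>v v) (B *\<^sub>v w))"
    using kron_mv_vkron[OF A(1) B(1) v w] by simp
  also have "\<dots> = cinner v (A *\<^sub>v v) * cinner w (B *\<^sub>v w)" using A B v w by (intro cinner_vkron) auto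
  finally show ?thesis using herm_form_Re_mult[OF A v B w] by simp
qed

lemma lower_seq: assumes G: "\<And>l. l \<in> set ls \<Longrightarrow> good d R0f Rxf cf hf l" and t: "0 < t" "t < 1"
  shows "\<exists>v \<in> carrier_vec (Dm ls d). 0 < Re (cinner v (Tl ls R0f *\<^sub>v v)) \<and>
    t ^ length ls * Kp ls cf * Re (cinner v (Tl ls R0f *\<^sub>v v)) \<le> Kp ls hf * Re (cinner v (Tl ls Rxf *\<^sub>v v))"
  using G
proof (induction ls)
  case Nil
  have "cinner (unit_vec 1 0) (1\<^sub>m 1 *\<^sub>v unit_vec 1 0) = 1" by (simp add: cinner_unit)
  thus ?case by (intro bexI[of _ "unit_vec 1 0"]) auto
next
  case (Cons l ls)
  have g: "good d R0f Rxf cf hf l" using Cons.prems by simp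
  obtain v' where v': "v' \<in> carrier_vec (Dm ls d)" "0 < Re (cinner v' (Tl ls R0f *\<^sub>v v'))"
    "t ^ length ls * Kp ls cf * Re (cinner v' (Tl ls R0f *\<^sub>v v')) \<le> Kp ls hf * Re (cinner v' (Tl ls Rxf *\<^sub>v v'))"
    using Cons by auto
  have "t * cf l < cf l" using g t unfolding good_def by simp
  then obtain v where v: "v \<in> carrier_vec (d l)" "0 < Re (cinner v (R0f l *\<^sub>v v))"
    "t * cf l * Re (cinner v (R0f l *\<^sub>v v)) < hf l * Re (cinner v (Rxf l *\<^sub>v v))"
    using g unfolding good_def by blast
  have h0: "R0f l \<in> carrier_mat (d l) (d l)" "cadj (R0f l) = R0f l" "Rxf l \<in> carrier_mat (d l) (d l)" "cadj (Rxf l) = Rxf l"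
    using g by (auto simp: good_def psd_def)
  have pT: "psd (Dm ls d) (Tl ls R0f)" "psd (Dm ls d) (Tl ls Rxf)" using Cons.prems by (auto intro!: Tl_psd simp: good_def)
  have h1: "Tl ls R0f \<in> carrier_mat (Dm ls d) (Dm ls d)" "cadj (Tl ls R0f) = Tl ls R0f"
    "Tl ls Rxf \<in> carrier_mat (Dm ls d) (Dm ls d)" "cadj (Tl ls Rxf) = Tl ls Rxf"
    using pT by (auto simp: psd_def)
  define a where "a = Re (cinner v (R0f l *\<^sub>v v))"
  define b where "b = Re (cinner v (Rxf l *\<^sub>v v))"
  define a' where "a' = Re (cinner v' (Tl ls R0f *\<^sub>v v'))"
  define b' where "b' = Re (cinner v' (Tl ls Rxf *\<^sub>v v'))"
  have fa: "Re (cinner (vkron v v') (Tl (l # ls) R0f *\<^sub>v vkron v v')) = a * a'"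
    unfolding a_def a'_def using kron_form[OF h0(1,2) v(1) h1(1,2) v'(1)] by simp
  have fb: "Re (cinner (vkron v v') (Tl (l # ls) Rxf *\<^sub>v vkron v v')) = b * b'"
    unfolding b_def b'_def using kron_form[OF h0(3,4) v(1) h1(3,4) v'(1)] by simp
  have ineq: "(t * cf l * a) * (t ^ length ls * Kp ls cf * a') \<le> (hf l * b) * (Kp ls hf * b')"
  proof (rule mult_mono)
    show "t * cf l * a \<le> hf l * b" using v(3) unfolding a_def b_def by simp
    show "t ^ length ls * Kp ls cf * a' \<le> Kp ls hf * b'" using v'(3) unfolding a'_def b'_def by simp
    show "0 \<le> hf l * b" using v(3) v(2) g t unfolding a_def b_def good_def
      by (smt (verit) mult_pos_pos)
    have "0 < Kp ls cf" using Cons.prems by (intro Kp_pos) (auto simp: good_def)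
    thus "0 \<le> t ^ length ls * Kp ls cf * a'" using t v'(2) unfolding a'_def by simp
  qed
  have "t ^ length (l # ls) * Kp (l # ls) cf * (a * a') = (t * cf l * a) * (t ^ length ls * Kp ls cf * a')"
    by (simp add: algebra_simps)
  also have "\<dots> \<le> Kp (l # ls) hf * (b * b')" using ineq by (simp add: algebra_simps)
  finally have fin: "t ^ length (l # ls) * Kp (l # ls) cf * (a * a') \<le> Kp (l # ls) hf * (b * b')" .
  have "0 < a * a'" using v(2) v'(2) unfolding a_def a'_def by simp
  thus ?case using fin fa fb v(1) v'(1) by (intro bexI[of _ "vkron v v'"]) auto
qed

lemma pow_close: assumes K: "0 < (K::real)" and q: "q < K" shows "\<exists>t. 0 < t \<and> t < 1 \<and> q < t ^ N * K"
proof (cases "q \<le> 0")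
  case True
  have "0 < (1/2::real) ^ N * K" using K by simp
  thus ?thesis using True by (intro exI[of _ "1/2"]) auto
next
  case False
  hence q0: "0 < q" by simp
  define e where "e = (1 - q / K) / (2 * (real N + 1))"
  have qK: "q / K < 1" using q K by simp
  have e0: "0 < e" unfolding e_def using qK by simp
  have e1: "e \<le> 1 / 2"
  proof -
    have n: "1 - q / K \<le> 1" "0 \<le> 1 - q / K" using q0 K qK by auto
    have "e \<le> (1 - q / K) / 2" unfolding e_def using n by (intro divide_left_mono) auto
    thus ?thesis using n by simp
  qed
  define t where "t = 1 - e"
  have "1 + real N * (- e) \<le> (1 + (- e)) ^ N" using e1 by (intro Bernoulli_inequality) simp
  hence b: "1 - real N * e \<le> t ^ N" unfolding t_def by simp
  have "real N * e \<le> (1 - q / K) / 2"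
  proof -
    have "real N * e = (1 - q / K) / 2 * (real N / (real N + 1))" unfolding e_def by (simp add: field_simps)
    also have "\<dots> \<le> (1 - q / K) / 2 * 1" using qK by (intro mult_left_mono) auto
    finally show ?thesis by simp
  qed
  hence "(1 + q / K) / 2 \<le> t ^ N" using b by simp
  hence "(1 + q / K) / 2 * K \<le> t ^ N * K" using K by (intro mult_right_mono) auto
  moreover have "q < (1 + q / K) / 2 * K" using q K by (simp add: field_simps)
  ultimately show ?thesis using e0 e1 unfolding t_def by (intro exI[of _ "1 - e"]) auto
qed

lemma seq_inf: assumes G: "\<And>l. l \<in> set ls \<Longrightarrow> good d R0f Rxf cf hf l"
  shows "Inf {q. psd (Dm ls d) (complex_of_real q \<cdot>\<^sub>m Tl ls R0f - complex_of_real (Kp ls hf) \<cdot>\<^sub>m Tl ls Rxf)} = Kp ls cf"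
proof (rule cInf_eq_minimum)
  show "Kp ls cf \<in> {q. psd (Dm ls d) (complex_of_real q \<cdot>\<^sub>m Tl ls R0f - complex_of_real (Kp ls hf) \<cdot>\<^sub>m Tl ls Rxf)}"
    using Mseq_psd[OF G] unfolding Mseq_def by simp
  fix q assume "q \<in> {q. psd (Dm ls d) (complex_of_real q \<cdot>\<^sub>m Tl ls R0f - complex_of_real (Kp ls hf) \<cdot>\<^sub>m Tl ls Rxf)}"
  hence qS: "psd (Dm ls d) (complex_of_real q \<cdot>\<^sub>m Tl ls R0f - complex_of_real (Kp ls hf) \<cdot>\<^sub>m Tl ls Rxf)" by simp
  have pT: "psd (Dm ls d) (Tl ls R0f)" "psd (Dm ls d) (Tl ls Rxf)" using G by (auto intro!: Tl_psd simp: good_def)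
  have h1: "Tl ls R0f \<in> carrier_mat (Dm ls d) (Dm ls d)" "cadj (Tl ls R0f) = Tl ls R0f"
    "Tl ls Rxf \<in> carrier_mat (Dm ls d) (Dm ls d)" "cadj (Tl ls Rxf) = Tl ls Rxf"
    using pT by (auto simp: psd_def)
  have K: "0 < Kp ls cf" using G by (intro Kp_pos) (auto simp: good_def)
  show "Kp ls cf \<le> q"
  proof (rule ccontr)
    assume "\<not> Kp ls cf \<le> q"
    then obtain t where t: "0 < t" "t < 1" "q < t ^ length ls * Kp ls cf" using pow_close[OF K] by force
    obtain v where v: "v \<in> carrier_vec (Dm ls d)" "0 < Re (cinner v (Tl ls R0f *\<^sub>v v))"
      "t ^ length ls * Kp ls cf * Re (cinner v (Tl ls R0f *\<^sub>v v)) \<le> Kp ls hf * Re (cinner v (Tl ls Rxf *\<^sub>v v))"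
      using lower_seq[OF G t(1,2)] by blast
    have "0 \<le> q * Re (cinner v (Tl ls R0f *\<^sub>v v)) - Kp ls hf * Re (cinner v (Tl ls Rxf *\<^sub>v v))"
      using qS lin_psd_iff[OF h1] v(1) by blast
    moreover have "q * Re (cinner v (Tl ls R0f *\<^sub>v v)) < t ^ length ls * Kp ls cf * Re (cinner v (Tl ls R0f *\<^sub>v v))"
      using t(3) v(2) by (intro mult_strict_right_mono) auto
    ultimately show False using v(3) by simp
  qed
qed

lemma smult_mv_zero: assumes X: "(X :: complex mat) \<in> carrier_mat N N" and w: "w \<in> carrier_vec N" and c: "c \<noteq> 0"
  and z: "(c \<cdot>\<^sub>m X) *\<^sub>v w = 0\<^sub>v N" shows "X *\<^sub>v w = 0\<^sub>v N"
proof (rule vec_eqI_carrier[of _ N])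
  fix i assume i: "i < N"
  have "((c \<cdot>\<^sub>m X) *\<^sub>v w) $ i = c * (X *\<^sub>v w) $ i" using X w i by (simp add: smult_mat_mv)
  hence "c * (X *\<^sub>v w) $ i = 0" using z i by simp
  thus "(X *\<^sub>v w) $ i = 0\<^sub>v N $ i" using c i by simp
qed (use X w in auto)

lemma herm_zero: assumes Z: "(Z :: complex mat) \<in> carrier_mat N N" "cadj Z = Z" and z: "z \<in> carrier_vec N"
  and zz: "Z *\<^sub>v (Z *\<^sub>v z) = 0\<^sub>v N" shows "Z *\<^sub>v z = 0\<^sub>v N"
proof -
  have Zz: "Z *\<^sub>v z \<in> carrier_vec N" using Z z by simp
  have "cinner (Z *\<^sub>v z) (Z *\<^sub>v z) = cinner z (Z *\<^sub>v (Z *\<^sub>v z))" using cinner_adj[OF Z(1) z Zz] Z(2) by simp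
  also have "\<dots> = 0" using zz z by (simp add: cinner_zero_right)
  finally have "Z *\<^sub>v z = 0\<^sub>v (dim_vec (Z *\<^sub>v z))" by (rule cinner_self_zero)
  thus ?thesis using Z by simp
qed

lemma kron_split1: assumes "X \<in> carrier_mat a a" "Y \<in> carrier_mat b b"
  shows "kron X Y = kron X (1\<^sub>m b) * kron (1\<^sub>m a) Y"
  using kron_mult[of X a a "1\<^sub>m b" b b "1\<^sub>m a" a Y b] assms by simp

lemma kron_split2: assumes "X \<in> carrier_mat a a" "Y \<in> carrier_mat b b"
  shows "kron X Y = kron (1\<^sub>m a) Y * kron X (1\<^sub>m b)"
  using kron_mult[of "1\<^sub>m a" a a Y b b X a "1\<^sub>m b" b] assms by simp

lemma kron_minus_left: assumes A: "A \<in> carrier_mat a a" and B: "B \<in> carrier_mat a a" and C: "C \<in> carrier_mat b b"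
  shows "kron (A - B) C = kron A C - kron B C"
proof (rule eq_matI)
  fix i j assume "i < dim_row (kron A C - kron B C)" "j < dim_col (kron A C - kron B C)"
  hence ij: "i < a * b" "j < a * b" using A B C by auto
  have i1: "i div b < a" "i mod b < b" "j div b < a" "j mod b < b" using ij div_lt_aux mod_lt_aux by auto
  show "kron (A - B) C $$ (i, j) = (kron A C - kron B C) $$ (i, j)"
    using A B C ij i1 by (simp add: kron_def algebra_simps)
qed (use A B C in auto)

lemma slice_zero: "slice D a (0\<^sub>v N) = 0\<^sub>v D" if "a * D + D \<le> N"
  using that by (intro eq_vecI) (auto simp: slice_def)

lemma ker_proj_herm: assumes "X \<in> carrier_mat n n" "cadj X = X"
  shows "ker_proj X \<in> carrier_mat n n" "cadj (ker_proj X) = ker_proj X"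
  using ker_proj_eq[OF assms] unfolding is_orth_proj_def by auto

lemma mv_assoc: "A \<in> carrier_mat n n \<Longrightarrow> B \<in> carrier_mat n n \<Longrightarrow> w \<in> carrier_vec n \<Longrightarrow> (A * B) *\<^sub>v w = A *\<^sub>v (B *\<^sub>v w)"
  by simp

lemma key_claim: assumes G: "\<And>l. l \<in> set ls \<Longrightarrow> good d R0f Rxf cf hf l"
  shows "w \<in> carrier_vec (Dm ls d) \<Longrightarrow> u \<in> carrier_vec (Dm ls d) \<Longrightarrow>
    Mseq ls R0f Rxf cf hf *\<^sub>v w = 0\<^sub>v (Dm ls d) \<Longrightarrow> w = Tl ls R0f *\<^sub>v u \<Longrightarrow>
    Tl ls (\<lambda>l. ker_proj (complex_of_real (cf l) \<cdot>\<^sub>m R0f l - complex_of_real (hf l) \<cdot>\<^sub>m Rxf l)) *\<^sub>v w = w"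
  using G
proof (induction ls arbitrary: w u)
  case Nil
  thus ?case by simp
next
  case (Cons l ls w u)
  define dl where "dl = d l"
  define D where "D = Dm ls d"
  define A0 where "A0 = R0f l"
  define A1 where "A1 = Rxf l"
  define c where "c = cf l"
  define h where "h = hf l"
  define Al where "Al = complex_of_real c \<cdot>\<^sub>m A0 - complex_of_real h \<cdot>\<^sub>m A1"
  define B0 where "B0 = Tl ls R0f"
  define B1 where "B1 = Tl ls Rxf"
  define M' where "M' = Mseq ls R0f Rxf cf hf"
  define Q' where "Q' = Tl ls (\<lambda>l. ker_proj (complex_of_real (cf l) \<cdot>\<^sub>m R0f l - complex_of_real (hf l) \<cdot>\<^sub>m Rxf l))"
  define Ql where "Ql = ker_proj Al"
  have g: "good d R0f Rxf cf hf l" using Cons.prems by simp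
  have Gls: "\<And>l'. l' \<in> set ls \<Longrightarrow> good d R0f Rxf cf hf l'" using Cons.prems by simp
  have pA0: "psd dl A0" and pA1: "psd dl A1" and pAl: "psd dl Al" and c0: "0 < c" and h0: "0 < h"
    using g unfolding good_def dl_def A0_def A1_def Al_def c_def h_def by auto
  have cA0: "A0 \<in> carrier_mat dl dl" "cadj A0 = A0" using pA0 by (auto simp: psd_def)
  have cA1: "A1 \<in> carrier_mat dl dl" using pA1 by (auto simp: psd_def)
  have cAl: "Al \<in> carrier_mat dl dl" "cadj Al = Al" using pAl by (auto simp: psd_def)
  have pB0: "psd D B0" and pB1: "psd D B1" unfolding D_def B0_def B1_def using Gls by (auto intro!: Tl_psd simp: good_def)
  have cB0: "B0 \<in> carrier_mat D D" "cadj B0 = B0" using pB0 by (auto simp: psd_def)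
  have cB1: "B1 \<in> carrier_mat D D" using pB1 by (auto simp: psd_def)
  have pM': "psd D M'" unfolding D_def M'_def using Gls by (intro Mseq_psd) auto
  have cM': "M' \<in> carrier_mat D D" using pM' by (auto simp: psd_def)
  have Kc: "0 < Kp ls cf" "0 < Kp ls hf" using Gls by (auto intro!: Kp_pos simp: good_def)
  have cQ': "Q' \<in> carrier_mat D D" unfolding Q'_def D_def
  proof (rule Tl_carrier)
    fix l' assume "l' \<in> set ls"
    hence "psd (d l') (complex_of_real (cf l') \<cdot>\<^sub>m R0f l' - complex_of_real (hf l') \<cdot>\<^sub>m Rxf l')" using Gls by (auto simp: good_def)
    thus "ker_proj (complex_of_real (cf l') \<cdot>\<^sub>m R0f l' - complex_of_real (hf l') \<cdot>\<^sub>m Rxf l') \<in> carrier_mat (d l') (d l')"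
      by (intro ker_proj_herm) (auto simp: psd_def)
  qed
  have cQl: "Ql \<in> carrier_mat dl dl" unfolding Ql_def using cAl by (rule ker_proj_herm)
  have w: "w \<in> carrier_vec (dl * D)" and u: "u \<in> carrier_vec (dl * D)" using Cons.prems unfolding dl_def D_def by auto
  have Mw: "Mseq (l # ls) R0f Rxf cf hf *\<^sub>v w = 0\<^sub>v (dl * D)" using Cons.prems unfolding dl_def D_def by simp
  have wu: "w = kron A0 B0 *\<^sub>v u" using Cons.prems unfolding A0_def B0_def by simp
  have Mcons: "Mseq (l # ls) R0f Rxf cf hf = complex_of_real (c * Kp ls cf) \<cdot>\<^sub>m kron A0 B0 - complex_of_real (h * Kp ls hf) \<cdot>\<^sub>m kron A1 B1"
    unfolding Mseq_def A0_def A1_def B0_def B1_def c_def h_def by simp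
  have M'def: "M' = complex_of_real (Kp ls cf) \<cdot>\<^sub>m B0 - complex_of_real (Kp ls hf) \<cdot>\<^sub>m B1"
    unfolding M'_def Mseq_def B0_def B1_def ..
  have dec2: "Mseq (l # ls) R0f Rxf cf hf = complex_of_real c \<cdot>\<^sub>m kron A0 M' + kron Al (complex_of_real (Kp ls hf) \<cdot>\<^sub>m B1)"
    unfolding Mcons M'def Al_def by (rule kron_decomp2[OF cA0(1) cA1 cB0(1) cB1])
  have dec1: "Mseq (l # ls) R0f Rxf cf hf = complex_of_real (Kp ls cf) \<cdot>\<^sub>m kron Al B0 + complex_of_real h \<cdot>\<^sub>m kron A1 M'"
    unfolding Mcons M'def Al_def by (rule kron_decomp1[OF cA0(1) cA1 cB0(1) cB1])
  have z1: "(complex_of_real c \<cdot>\<^sub>m kron A0 M') *\<^sub>v w = 0\<^sub>v (dl * D)"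
  proof (rule psd_sum_zero(1))
    show "psd (dl * D) (complex_of_real c \<cdot>\<^sub>m kron A0 M')" using pA0 pM' c0 by (intro psd_smult kron_psd) auto
    show "psd (dl * D) (kron Al (complex_of_real (Kp ls hf) \<cdot>\<^sub>m B1))" using pAl pB1 Kc by (intro kron_psd psd_smult) auto
  qed (use w Mw dec2 in auto)
  have z2: "(complex_of_real (Kp ls cf) \<cdot>\<^sub>m kron Al B0) *\<^sub>v w = 0\<^sub>v (dl * D)"
  proof (rule psd_sum_zero(1))
    show "psd (dl * D) (complex_of_real (Kp ls cf) \<cdot>\<^sub>m kron Al B0)" using pAl pB0 Kc by (intro psd_smult kron_psd) auto
    show "psd (dl * D) (complex_of_real h \<cdot>\<^sub>m kron A1 M')" using pA1 pM' h0 by (intro psd_smult kron_psd) auto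
  qed (use w Mw dec1 in auto)
  have kA0M': "kron A0 M' *\<^sub>v w = 0\<^sub>v (dl * D)"
    using smult_mv_zero[OF _ w _ z1] cA0 cM' c0 by auto
  have kAlB0: "kron Al B0 *\<^sub>v w = 0\<^sub>v (dl * D)"
    using smult_mv_zero[OF _ w _ z2] cAl cB0 Kc by auto
  have I1: "1\<^sub>m dl \<in> carrier_mat dl dl" and I2: "1\<^sub>m D \<in> carrier_mat D D" by auto
  have y0: "kron (1\<^sub>m dl) M' *\<^sub>v w = 0\<^sub>v (dl * D)"
  proof -
    have Z: "kron A0 (1\<^sub>m D) \<in> carrier_mat (dl * D) (dl * D)" "cadj (kron A0 (1\<^sub>m D)) = kron A0 (1\<^sub>m D)"
      using cA0 I2 cadj_kron[OF cA0(1) I2] by auto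
    define z where "z = kron (1\<^sub>m dl) (M' * B0) *\<^sub>v u"
    have zc: "z \<in> carrier_vec (dl * D)" unfolding z_def
      using kron_carrier[OF I1 mult_carrier_mat[OF cM' cB0(1)]] u by (rule mult_mat_vec_carrier)
    have "kron (1\<^sub>m dl) M' *\<^sub>v w = (kron (1\<^sub>m dl) M' * kron A0 B0) *\<^sub>v u"
      unfolding wu using cA0 cB0 cM' u by (intro mv_assoc[symmetric]) auto
    also have "kron (1\<^sub>m dl) M' * kron A0 B0 = kron A0 (M' * B0)"
      using kron_mult[OF I1 cM' cA0(1) cB0(1)] cA0 by simp
    also have "\<dots> = kron A0 (1\<^sub>m D) * kron (1\<^sub>m dl) (M' * B0)" using cA0 cM' cB0 by (intro kron_split1) auto
    also have "(kron A0 (1\<^sub>m D) * kron (1\<^sub>m dl) (M' * B0)) *\<^sub>v u = kron A0 (1\<^sub>m D) *\<^sub>v z"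
      unfolding z_def using cA0 cM' cB0 u by (intro mv_assoc) auto
    finally have yz: "kron (1\<^sub>m dl) M' *\<^sub>v w = kron A0 (1\<^sub>m D) *\<^sub>v z" .
    have "kron A0 (1\<^sub>m D) *\<^sub>v (kron A0 (1\<^sub>m D) *\<^sub>v z) = kron A0 (1\<^sub>m D) *\<^sub>v (kron (1\<^sub>m dl) M' *\<^sub>v w)" using yz by simp
    also have "\<dots> = (kron A0 (1\<^sub>m D) * kron (1\<^sub>m dl) M') *\<^sub>v w" using cA0 cM' w by (intro mv_assoc[symmetric]) auto
    also have "kron A0 (1\<^sub>m D) * kron (1\<^sub>m dl) M' = kron A0 M'" using kron_split1[OF cA0(1) cM'] by simp
    finally have "kron A0 (1\<^sub>m D) *\<^sub>v (kron A0 (1\<^sub>m D) *\<^sub>v z) = 0\<^sub>v (dl * D)" using kA0M' by simp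
    hence "kron A0 (1\<^sub>m D) *\<^sub>v z = 0\<^sub>v (dl * D)" using herm_zero[OF Z zc] by simp
    thus ?thesis using yz by simp
  qed
  have tail: "kron (1\<^sub>m dl) Q' *\<^sub>v w = w"
  proof (rule slice_eq[of _ dl D])
    show "kron (1\<^sub>m dl) Q' *\<^sub>v w \<in> carrier_vec (dl * D)" using kron_carrier[OF I1 cQ'] w by (rule mult_mat_vec_carrier)
    show "w \<in> carrier_vec (dl * D)" by (rule w)
    fix a assume a: "a < dl"
    define u' where "u' = kron A0 (1\<^sub>m D) *\<^sub>v u"
    have u'c: "u' \<in> carrier_vec (dl * D)" unfolding u'_def using kron_carrier[OF cA0(1) I2] u by (rule mult_mat_vec_carrier)
    have wsplit: "w = kron (1\<^sub>m dl) B0 *\<^sub>v u'"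
    proof -
      have "w = (kron (1\<^sub>m dl) B0 * kron A0 (1\<^sub>m D)) *\<^sub>v u" unfolding wu using kron_split2[OF cA0(1) cB0(1)] by simp
      also have "\<dots> = kron (1\<^sub>m dl) B0 *\<^sub>v u'" unfolding u'_def using cA0 cB0 u by (intro mv_assoc) auto
      finally show ?thesis .
    qed
    have s1: "slice D a w = B0 *\<^sub>v slice D a u'" unfolding wsplit using slice_kron_I[OF cB0(1) u'c a] .
    have "M' *\<^sub>v slice D a w = slice D a (kron (1\<^sub>m dl) M' *\<^sub>v w)" using slice_kron_I[OF cM' w a] by simp
    also have "\<dots> = 0\<^sub>v D"
    proof -
      have "Suc a \<le> dl" using a by simp
      hence "Suc a * D \<le> dl * D" by (rule mult_le_mono1)
      hence "a * D + D \<le> dl * D" by simp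
      thus ?thesis unfolding y0 by (rule slice_zero)
    qed
    finally have s2: "M' *\<^sub>v slice D a w = 0\<^sub>v D" .
    have "Q' *\<^sub>v slice D a w = slice D a w" unfolding Q'_def D_def
    proof (rule Cons.IH)
      show "slice (Dm ls d) a w \<in> carrier_vec (Dm ls d)" by simp
      show "slice (Dm ls d) a u' \<in> carrier_vec (Dm ls d)" by simp
      show "Mseq ls R0f Rxf cf hf *\<^sub>v slice (Dm ls d) a w = 0\<^sub>v (Dm ls d)" using s2 unfolding M'_def D_def .
      show "slice (Dm ls d) a w = Tl ls R0f *\<^sub>v slice (Dm ls d) a u'" using s1 unfolding B0_def D_def .
      show "\<And>l. l \<in> set ls \<Longrightarrow> good d R0f Rxf cf hf l" by (rule Gls)
    qed
    thus "slice D a (kron (1\<^sub>m dl) Q' *\<^sub>v w) = slice D a w" using slice_kron_I[OF cQ' w a] by simp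
  qed
  have y2: "kron Al (1\<^sub>m D) *\<^sub>v w = 0\<^sub>v (dl * D)"
  proof -
    have Z: "kron (1\<^sub>m dl) B0 \<in> carrier_mat (dl * D) (dl * D)" "cadj (kron (1\<^sub>m dl) B0) = kron (1\<^sub>m dl) B0"
      using cB0 I1 cadj_kron[OF I1 cB0(1)] by auto
    define z where "z = kron (Al * A0) (1\<^sub>m D) *\<^sub>v u"
    have zc: "z \<in> carrier_vec (dl * D)" unfolding z_def
      using kron_carrier[OF mult_carrier_mat[OF cAl(1) cA0(1)] I2] u by (rule mult_mat_vec_carrier)
    have "kron Al (1\<^sub>m D) *\<^sub>v w = (kron Al (1\<^sub>m D) * kron A0 B0) *\<^sub>v u"
      unfolding wu using cA0 cB0 cAl u by (intro mv_assoc[symmetric]) auto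
    also have "kron Al (1\<^sub>m D) * kron A0 B0 = kron (Al * A0) B0"
      using kron_mult[OF cAl(1) I2 cA0(1) cB0(1)] cB0 by simp
    also have "\<dots> = kron (1\<^sub>m dl) B0 * kron (Al * A0) (1\<^sub>m D)" using cA0 cAl cB0 by (intro kron_split2) auto
    also have "(kron (1\<^sub>m dl) B0 * kron (Al * A0) (1\<^sub>m D)) *\<^sub>v u = kron (1\<^sub>m dl) B0 *\<^sub>v z"
      unfolding z_def using cA0 cAl cB0 u by (intro mv_assoc) auto
    finally have yz: "kron Al (1\<^sub>m D) *\<^sub>v w = kron (1\<^sub>m dl) B0 *\<^sub>v z" .
    have "kron (1\<^sub>m dl) B0 *\<^sub>v (kron (1\<^sub>m dl) B0 *\<^sub>v z) = kron (1\<^sub>m dl) B0 *\<^sub>v (kron Al (1\<^sub>m D) *\<^sub>v w)" using yz by simp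
    also have "\<dots> = (kron (1\<^sub>m dl) B0 * kron Al (1\<^sub>m D)) *\<^sub>v w" using cAl cB0 w by (intro mv_assoc[symmetric]) auto
    also have "kron (1\<^sub>m dl) B0 * kron Al (1\<^sub>m D) = kron Al B0" using kron_split2[OF cAl(1) cB0(1)] by simp
    finally have "kron (1\<^sub>m dl) B0 *\<^sub>v (kron (1\<^sub>m dl) B0 *\<^sub>v z) = 0\<^sub>v (dl * D)" using kAlB0 by simp
    hence "kron (1\<^sub>m dl) B0 *\<^sub>v z = 0\<^sub>v (dl * D)" using herm_zero[OF Z zc] by simp
    thus ?thesis using yz by simp
  qed
  obtain Y where Y: "Y \<in> carrier_mat dl dl" "supp_proj Al = cadj Y * Al" using supp_proj_factor[OF cAl] by blast
  have Qleq: "Ql = 1\<^sub>m dl - supp_proj Al" unfolding Ql_def using ker_proj_eq(1)[OF cAl] .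
  have cPa: "supp_proj Al \<in> carrier_mat dl dl" using supp_proj_fix(1)[OF cAl(1)] .
  have Paw: "kron (supp_proj Al) (1\<^sub>m D) *\<^sub>v w = 0\<^sub>v (dl * D)"
  proof -
    have "kron (supp_proj Al) (1\<^sub>m D) = kron (cadj Y) (1\<^sub>m D) * kron Al (1\<^sub>m D)"
      using kron_mult[OF cadj_carrier[OF Y(1)] I2 cAl(1) I2] Y by simp
    hence "kron (supp_proj Al) (1\<^sub>m D) *\<^sub>v w = kron (cadj Y) (1\<^sub>m D) *\<^sub>v (kron Al (1\<^sub>m D) *\<^sub>v w)"
      using mv_assoc[OF kron_carrier[OF cadj_carrier[OF Y(1)] I2] kron_carrier[OF cAl(1) I2] w] by simp
    also have "\<dots> = 0\<^sub>v (dl * D)" unfolding y2 using Y by (intro eq_vecI) (auto simp: scalar_prod_def)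
    finally show ?thesis .
  qed
  have head: "kron Ql (1\<^sub>m D) *\<^sub>v w = w"
  proof -
    have "kron Ql (1\<^sub>m D) = 1\<^sub>m (dl * D) - kron (supp_proj Al) (1\<^sub>m D)"
      unfolding Qleq using kron_minus_left[OF I1 cPa I2] by (simp add: kron_one)
    hence "kron Ql (1\<^sub>m D) *\<^sub>v w = w - kron (supp_proj Al) (1\<^sub>m D) *\<^sub>v w"
      using one_minus_mv[of "kron (supp_proj Al) (1\<^sub>m D)" "dl * D" w] cPa w by auto
    also have "\<dots> = w" unfolding Paw using w by (intro eq_vecI) auto
    finally show ?thesis .
  qed
  have "Tl (l # ls) (\<lambda>l. ker_proj (complex_of_real (cf l) \<cdot>\<^sub>m R0f l - complex_of_real (hf l) \<cdot>\<^sub>m Rxf l)) = kron Ql Q'"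
    unfolding Ql_def Q'_def Al_def c_def h_def A0_def A1_def by simp
  also have "\<dots> = kron Ql (1\<^sub>m D) * kron (1\<^sub>m dl) Q'" using kron_split1[OF cQl cQ'] .
  finally have "Tl (l # ls) (\<lambda>l. ker_proj (complex_of_real (cf l) \<cdot>\<^sub>m R0f l - complex_of_real (hf l) \<cdot>\<^sub>m Rxf l)) *\<^sub>v w =
    kron Ql (1\<^sub>m D) *\<^sub>v (kron (1\<^sub>m dl) Q' *\<^sub>v w)"
    using mv_assoc[OF kron_carrier[OF cQl I2] kron_carrier[OF I1 cQ'] w] by simp
  also have "\<dots> = w" using tail head by simp
  finally show ?case .
qed

lemma trace_zero: assumes M: "psd N M" and E: "psd N E" and tr: "ctrace (M * E) = 0"
  shows "M * E = 0\<^sub>m N N"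
proof -
  obtain m X where X: "X \<in> carrier_mat N m" "E = X * cadj X" using psd_factor[OF E] by blast
  have Mc: "M \<in> carrier_mat N N" using M by (simp add: psd_def)
  have cX: "cadj X \<in> carrier_mat m N" using X by simp
  have MX: "M * X \<in> carrier_mat N m" using Mc X by simp
  have ME: "M * E = (M * X) * cadj X" unfolding X(2) using assoc_mult_mat[OF Mc X(1) cX] by simp
  have "ctrace (M * E) = (\<Sum>i<N. \<Sum>k<m. (M * X) $$ (i, k) * cadj X $$ (k, i))"
    unfolding ME ctrace_def using MX cX by (intro sum.cong refl) (auto simp: mult_idx[OF MX cX])
  also have "\<dots> = (\<Sum>k<m. \<Sum>i<N. cnj (col X k $ i) * (M *\<^sub>v col X k) $ i)"
    using X Mc by (subst sum.swap) (auto intro!: sum.cong simp: mult.commute)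
  also have "\<dots> = (\<Sum>k<m. cinner (col X k) (M *\<^sub>v col X k))"
    using X by (auto simp: cinner_def intro!: sum.cong)
  finally have s: "(\<Sum>k<m. Re (cinner (col X k) (M *\<^sub>v col X k))) = 0" using tr by (metis Re_sum zero_complex.sel(1))
  have nn: "\<And>k. k \<in> {..<m} \<Longrightarrow> 0 \<le> Re (cinner (col X k) (M *\<^sub>v col X k))"
    using X by (intro psd_form[OF M]) auto
  have z: "Re (cinner (col X k) (M *\<^sub>v col X k)) = 0" if "k < m" for k
    using sum_nonneg_eq_0_iff[of "{..<m}" "\<lambda>k. Re (cinner (col X k) (M *\<^sub>v col X k))"] s nn that by auto
  have MXz: "M * X = 0\<^sub>m N m"
  proof (rule eq_matI)
    fix i k assume "i < dim_row (0\<^sub>m N m :: complex mat)" "k < dim_col (0\<^sub>m N m :: complex mat)"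
    hence ik: "i < N" "k < m" by auto
    have "M *\<^sub>v col X k = 0\<^sub>v N" using psd_quad_zero[OF M _ z[OF ik(2)]] X ik by auto
    hence "(M *\<^sub>v col X k) $ i = 0" using ik by simp
    thus "(M * X) $$ (i, k) = 0\<^sub>m N m $$ (i, k)" using ik Mc X by simp
  qed (use MX in auto)
  show ?thesis unfolding ME MXz using left_mult_zero_mat[OF cX] .
qed

lemma ker_M: assumes M: "psd N (complex_of_real K \<cdot>\<^sub>m R0 - complex_of_real H \<cdot>\<^sub>m Rx)"
  and R0: "R0 \<in> carrier_mat N N" and Rx: "psd N Rx" and H: "0 < H"
  and k: "k \<in> carrier_vec N" and Rk: "R0 *\<^sub>v k = 0\<^sub>v N"
  shows "(complex_of_real K \<cdot>\<^sub>m R0 - complex_of_real H \<cdot>\<^sub>m Rx) *\<^sub>v k = 0\<^sub>v N"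
proof (rule psd_quad_zero[OF M k])
  have Rxc: "Rx \<in> carrier_mat N N" using Rx by (simp add: psd_def)
  have "Re (cinner k ((complex_of_real K \<cdot>\<^sub>m R0 - complex_of_real H \<cdot>\<^sub>m Rx) *\<^sub>v k)) =
    K * Re (cinner k (R0 *\<^sub>v k)) - H * Re (cinner k (Rx *\<^sub>v k))" by (rule lin_form[OF R0 Rxc k])
  also have "Re (cinner k (R0 *\<^sub>v k)) = 0" using Rk k by (simp add: cinner_zero_right)
  finally have e: "Re (cinner k ((complex_of_real K \<cdot>\<^sub>m R0 - complex_of_real H \<cdot>\<^sub>m Rx) *\<^sub>v k)) = - H * Re (cinner k (Rx *\<^sub>v k))"
    by simp
  have "0 \<le> Re (cinner k (Rx *\<^sub>v k))" using psd_form[OF Rx k] .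
  hence "Re (cinner k ((complex_of_real K \<cdot>\<^sub>m R0 - complex_of_real H \<cdot>\<^sub>m Rx) *\<^sub>v k)) \<le> 0" unfolding e using H
    by (simp add: mult_nonneg_nonneg)
  moreover have "0 \<le> Re (cinner k ((complex_of_real K \<cdot>\<^sub>m R0 - complex_of_real H \<cdot>\<^sub>m Rx) *\<^sub>v k))" using psd_form[OF M k] .
  ultimately show "Re (cinner k ((complex_of_real K \<cdot>\<^sub>m R0 - complex_of_real H \<cdot>\<^sub>m Rx) *\<^sub>v k)) = 0" by simp
qed

lemma prod_upt: "(\<Prod>l<L. f l) = prod_list (map f [0..<L])"
  by (induction L) auto

theorem lemma5:
  fixes L :: nat and d n :: "nat \<Rightarrow> nat"
    and \<eta> :: "nat \<Rightarrow> nat \<Rightarrow> real" and \<rho> :: "nat \<Rightarrow> nat \<Rightarrow> complex mat"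
    and x :: "nat \<Rightarrow> nat" and E :: "complex mat"
  assumes ens: "\<forall>l<L. ensemble (d l) (n l) (\<eta> l) (\<rho> l)"
    and x_range: "\<forall>l<L. x l < n l"
    and E_in: "E \<in> seq_MC_set L d n \<eta> \<rho> x"
  shows
    "(let P = supp_proj (seq_avg L d n \<eta> \<rho>);
          Q = tensor_list L (\<lambda>l. ker_proj
                (complex_of_real (comp_conf d n \<eta> \<rho> l (x l)) \<cdot>\<^sub>m avg_state (d l) (n l) (\<eta> l) (\<rho> l)
                 - complex_of_real (\<eta> l (x l)) \<cdot>\<^sub>m \<rho> l (x l)))
      in Q * P * E * P * Q = P * E * P)"
proof -
  define R0f where "R0f = (\<lambda>l. avg_state (d l) (n l) (\<eta> l) (\<rho> l))"
  define Rxf where "Rxf = (\<lambda>l. \<rho> l (x l))"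
  define cf where "cf = (\<lambda>l. comp_conf d n \<eta> \<rho> l (x l))"
  define hf where "hf = (\<lambda>l. \<eta> l (x l))"
  define ls where "ls = [0..<L]"
  have G: "good d R0f Rxf cf hf l" if l: "l \<in> set ls" for l
  proof -
    have E: "ensemble (d l) (n l) (\<eta> l) (\<rho> l)" and xl: "x l < n l" using l ens x_range unfolding ls_def by auto
    note cfacts = comp_facts[OF E xl]
    have "cf l = max_conf (d l) (\<eta> l (x l)) (\<rho> l (x l)) (avg_state (d l) (n l) (\<eta> l) (\<rho> l))"
      unfolding cf_def comp_conf_def ..
    thus ?thesis unfolding good_def R0f_def Rxf_def hf_def
      using cfacts avg_psd[OF E] ens_rho[OF E xl] by simp
  qed
  define N where "N = Dm ls d"
  define R0 where "R0 = Tl ls R0f"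
  define Rx where "Rx = Tl ls Rxf"
  define K where "K = Kp ls cf"
  define H where "H = Kp ls hf"
  define M where "M = complex_of_real K \<cdot>\<^sub>m R0 - complex_of_real H \<cdot>\<^sub>m Rx"
  define P where "P = supp_proj R0"
  define Q where "Q = Tl ls (\<lambda>l. ker_proj (complex_of_real (cf l) \<cdot>\<^sub>m R0f l - complex_of_real (hf l) \<cdot>\<^sub>m Rxf l))"
  have avg: "seq_avg L d n \<eta> \<rho> = R0" unfolding seq_avg_def tensor_list_def R0_def Tl_def ls_def R0f_def ..
  have st: "seq_state L \<rho> x = Rx" unfolding seq_state_def tensor_list_def Rx_def Tl_def ls_def Rxf_def ..
  have dim: "seq_dim L d = N" unfolding seq_dim_def N_def Dm_def ls_def prod_upt ..
  have prob: "seq_prob L \<eta> x = H" unfolding seq_prob_def H_def Kp_def ls_def hf_def prod_upt ..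
  have conf: "seq_conf L d n \<eta> \<rho> x = K"
    unfolding seq_conf_def max_conf_def avg st dim prob unfolding N_def R0_def Rx_def H_def K_def
    using seq_inf[OF G] by simp
  have Qdef: "tensor_list L (\<lambda>l. ker_proj
                (complex_of_real (comp_conf d n \<eta> \<rho> l (x l)) \<cdot>\<^sub>m avg_state (d l) (n l) (\<eta> l) (\<rho> l)
                 - complex_of_real (\<eta> l (x l)) \<cdot>\<^sub>m \<rho> l (x l))) = Q"
    unfolding Q_def tensor_list_def Tl_def ls_def cf_def hf_def R0f_def Rxf_def ..
  have Pdef: "supp_proj (seq_avg L d n \<eta> \<rho>) = P" unfolding avg P_def ..
  have Epsd: "psd N E" and tr: "ctrace (M * E) = 0"
    using E_in unfolding seq_MC_set_def conf avg st dim prob M_def by auto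
  have pM: "psd N M" unfolding M_def N_def K_def H_def R0_def Rx_def using Mseq_psd[OF G] unfolding Mseq_def .
  have ME: "M * E = 0\<^sub>m N N" using trace_zero[OF pM Epsd tr] .
  have pR0: "psd N R0" and pRx: "psd N Rx" unfolding N_def R0_def Rx_def using G by (auto intro!: Tl_psd simp: good_def)
  have cR0: "R0 \<in> carrier_mat N N" "cadj R0 = R0" using pR0 by (auto simp: psd_def)
  have cM: "M \<in> carrier_mat N N" using pM by (simp add: psd_def)
  have cE: "E \<in> carrier_mat N N" "cadj E = E" using Epsd by (auto simp: psd_def)
  note Pf = supp_proj_fix[OF cR0(1), folded P_def]
  have Hpos: "0 < H" unfolding H_def using G by (intro Kp_pos) (auto simp: good_def)
  have cQ: "Q \<in> carrier_mat N N" "cadj Q = Q"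
  proof -
    have h: "ker_proj (complex_of_real (cf l) \<cdot>\<^sub>m R0f l - complex_of_real (hf l) \<cdot>\<^sub>m Rxf l) \<in> carrier_mat (d l) (d l) \<and>
      cadj (ker_proj (complex_of_real (cf l) \<cdot>\<^sub>m R0f l - complex_of_real (hf l) \<cdot>\<^sub>m Rxf l)) =
        ker_proj (complex_of_real (cf l) \<cdot>\<^sub>m R0f l - complex_of_real (hf l) \<cdot>\<^sub>m Rxf l)" if "l \<in> set ls" for l
    proof -
      have "psd (d l) (complex_of_real (cf l) \<cdot>\<^sub>m R0f l - complex_of_real (hf l) \<cdot>\<^sub>m Rxf l)"
        using G[OF that] by (simp add: good_def)
      thus ?thesis using ker_proj_herm[of _ "d l"] by (auto simp: psd_def)
    qed
    show "Q \<in> carrier_mat N N" unfolding Q_def N_def using h by (intro Tl_carrier) auto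
    show "cadj Q = Q" unfolding Q_def using h by (intro Tl_herm) auto
  qed
  define F where "F = P * E * P"
  have cF: "F \<in> carrier_mat N N" unfolding F_def using Pf cE by auto
  have QF: "Q * F = F"
  proof (rule mat_eq_by_vec[of _ N N])
    show "Q * F \<in> carrier_mat N N" using cQ cF by auto
    show "F \<in> carrier_mat N N" by (rule cF)
    fix z :: "complex vec" assume z: "z \<in> carrier_vec N"
    define y where "y = E *\<^sub>v (P *\<^sub>v z)"
    have yc: "y \<in> carrier_vec N" unfolding y_def using cE Pf z by auto
    have Fz: "F *\<^sub>v z = P *\<^sub>v y"
    proof -
      have "F *\<^sub>v z = (P * E) *\<^sub>v (P *\<^sub>v z)" unfolding F_def using Pf cE z by (intro assoc_mult_mat_vec[of _ N N _ N]) auto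
      also have "\<dots> = P *\<^sub>v (E *\<^sub>v (P *\<^sub>v z))" using Pf cE z by (intro assoc_mult_mat_vec[of _ N N _ N]) auto
      finally show ?thesis unfolding y_def .
    qed
    have My: "M *\<^sub>v y = 0\<^sub>v N"
    proof -
      have "M *\<^sub>v y = (M * E) *\<^sub>v (P *\<^sub>v z)" unfolding y_def using cM cE Pf z by simp
      also have "\<dots> = 0\<^sub>v N" unfolding ME using Pf z by (intro eq_vecI) (auto simp: scalar_prod_def)
      finally show ?thesis .
    qed
    define w where "w = P *\<^sub>v y"
    have wc: "w \<in> carrier_vec N" unfolding w_def using Pf yc by auto
    have "w \<in> fixset N P" unfolding fixset_def w_def using Pf yc wc[unfolded w_def]
      by (simp flip: assoc_mult_mat_vec)
    hence "w \<in> mat_range R0" using Pf by simp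
    then obtain u where u: "u \<in> carrier_vec N" "w = R0 *\<^sub>v u" unfolding mat_range_def using cR0 by auto
    define k where "k = (1\<^sub>m N - P) *\<^sub>v y"
    have kc: "k \<in> carrier_vec N" unfolding k_def using minus_carrier_mat[OF Pf(1), of "1\<^sub>m N"] yc by (rule mult_mat_vec_carrier)
    have "k \<in> mat_range (1\<^sub>m N - P)" unfolding mat_range_def k_def using yc Pf by auto
    hence "k \<in> mat_kernel R0" using ker_proj_eq(2)[OF cR0] unfolding is_orth_proj_def P_def by simp
    hence Rk: "R0 *\<^sub>v k = 0\<^sub>v N" unfolding mat_kernel_def using cR0 by simp
    have Mk: "M *\<^sub>v k = 0\<^sub>v N" unfolding M_def using ker_M[OF pM[unfolded M_def] cR0(1) pRx Hpos kc Rk] .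
    have wyk: "w = y - k" unfolding w_def k_def using one_minus_mv[OF Pf(1) yc] yc Pf
      by (intro eq_vecI) auto
    have Mw: "M *\<^sub>v w = 0\<^sub>v N" unfolding wyk using My Mk cM yc kc
      by (simp add: mult_minus_distrib_mat_vec)
    have "Q *\<^sub>v w = w"
      using key_claim[OF G wc[unfolded N_def] u(1)[unfolded N_def]] Mw u(2)
      unfolding Q_def M_def Mseq_def K_def H_def R0_def Rx_def N_def by simp
    thus "(Q * F) *\<^sub>v z = F *\<^sub>v z" using Fz cQ cF z unfolding w_def by simp
  qed
  have hF: "cadj F = F"
  proof -
    have "cadj F = cadj P * cadj (P * E)" unfolding F_def using Pf cE by (intro cadj_mult) auto
    also have "cadj (P * E) = cadj E * cadj P" using Pf cE by (intro cadj_mult) auto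
    finally show ?thesis unfolding F_def using Pf cE by (simp add: assoc_mult_mat[of _ N N _ N _ N])
  qed
  have FQ: "F * Q = F"
  proof -
    have "F * Q = cadj (Q * F)" using cadj_mult[OF cQ(1) cF] cQ hF by simp
    thus ?thesis using QF hF by simp
  qed
  have "Q * P * E * P * Q = (Q * F) * Q" unfolding F_def using cQ Pf cE
    by (simp add: assoc_mult_mat[of _ N N _ N _ N])
  also have "\<dots> = F" using QF FQ by simp
  finally have main: "Q * P * E * P * Q = P * E * P" unfolding F_def .
  show ?thesis unfolding Let_def Qdef Pdef using main .
qed

end
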